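(* Let $\mathcal{D}[t]\subset\mathcal{H}\subset\mathcal{D}^\times[t^\times]$ be a rigged Hilbert space with $\mathcal{D}[t]$ complete and reflexive and $\mathcal{D}^\times[t^\times]$ quasi-complete. Let $\{\xi_n\}$ be a topological basis of $\mathcal{D}[t]$. The following statements are equivalent. (i) $\{\xi_n\}$ is a Riesz-like basis. (ii) There exists a unique sequence $\{\zeta_n\}\subset\mathcal{D}^\times$ such that (a) $\{\xi_n\}$ and $\{\zeta_n\}$ are biorthogonal, i.e. $\langle\zeta_n,\xi_k\rangle=\delta_{n,k}$; (b) $\sum_{n=1}^\infty|\langle\zeta_n,f\rangle|^2<\infty$ for every $f\in\mathcal{D}$; (c) the seminorm $p_\zeta(f)=\big(\sum_{n=1}^\infty|\langle\zeta_n,f\rangle|^2\big)^{1/2}$ is continuous on $\mathcal{D}[t]$. (iii) There exists $S\in\mathcal{L}(\mathcal{D},\mathcal{D}^\times)$ with $S\geq 0$ (i.e. $\langle Sf,f\rangle\geq0$ for all $f\in\mathcal{D}$) such that $\{\xi_n\}$ and $\{S\xi_n\}$ are biorthogonal, i.e. $\langle S\xi_n,\xi_k\rangle=\delta_{n,k}$ for all $n,k$.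
   Context: A rigged Hilbert space $\mathcal{D}[t]\subset\mathcal{H}\subset\mathcal{D}^\times[t^\times]$: $\mathcal{D}$ is a dense subspace of the Hilbert space $\mathcal{H}$ with a locally convex topology $t$ finer than the norm topology, $\mathcal{D}^\times$ is the space of continuous conjugate-linear functionals on $\mathcal{D}[t]$ with the strong dual topology $t^\times=\beta(\mathcal{D}^\times,\mathcal{D})$, $\mathcal{H}\subset\mathcal{D}^\times$, and the duality form $\langle\Phi,f\rangle$ (value of $\Phi\in\mathcal{D}^\times$ at $f\in\mathcal{D}$) extends the inner product. A locally convex space is quasi-complete if every closed bounded subset is complete. A topological basis of $\mathcal{D}[t]$ is a sequence $\{\xi_n\}$ such that every $f\in\mathcal{D}$ has a unique expansion $f=\sum c_n\xi_n$ converging in $\mathcal{D}[t]$; a Schauder basis is a topological basis whose coefficient functionals are $t$-continuous. $\mathcal{L}(\mathcal{D},\mathcal{D}^\times)$ denotes the continuous linear maps $\mathcal{D}[t]\to\mathcal{D}^\times[t^\times]$, and $\mathcal{C}(\mathcal{D},\mathcal{H})$ the set of those mapping $\mathcal{D}$ into $\mathcal{H}$ continuously from $\mathcal{D}[t]$ into $\mathcal{H}$. A Schauder basis $\{\xi_n\}$ of $\mathcal{D}[t]$ is a Riesz-like basis if there exists a one-to-one $T\in\mathcal{C}(\mathcal{D},\mathcal{H})$ such that $\{T\xi_n\}$ is an orthonormal basis of $\mathcal{H}$. *)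

theory Defs
  imports "HOL-Analysis.Analysis" "HOL-Library.Function_Algebras"
begin

definition cvsubspace :: "(complex \<Rightarrow> 'a \<Rightarrow> 'a) \<Rightarrow> 'a::ab_group_add set \<Rightarrow> bool" where
  "cvsubspace sc V \<longleftrightarrow> 0 \<in> V \<and> (\<forall>x\<in>V. \<forall>y\<in>V. x + y \<in> V) \<and> (\<forall>c. \<forall>x\<in>V. sc c x \<in> V)"

definition is_seminorm :: "(complex \<Rightarrow> 'a \<Rightarrow> 'a) \<Rightarrow> 'a::ab_group_add set \<Rightarrow> ('a \<Rightarrow> real) \<Rightarrow> bool" where
  "is_seminorm sc V p \<longleftrightarrow> (\<forall>x\<in>V. p x \<ge> 0) \<and> (\<forall>c. \<forall>x\<in>V. p (sc c x) = cmod c * p x)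
     \<and> (\<forall>x\<in>V. \<forall>y\<in>V. p (x + y) \<le> p x + p y)"

definition sn_topology :: "'a::ab_group_add set \<Rightarrow> ('a \<Rightarrow> real) set \<Rightarrow> 'a topology" where
  "sn_topology V P = topology_generated_by
     {{y \<in> V. \<forall>p\<in>F. p (y - x) < e} | x F e. x \<in> V \<and> finite F \<and> F \<subseteq> P \<and> e > 0}"

definition sn_bounded :: "('a \<Rightarrow> real) set \<Rightarrow> 'a set \<Rightarrow> bool" where
  "sn_bounded P B \<longleftrightarrow> (\<forall>p\<in>P. bdd_above (p ` B))"

definition sn_cauchy :: "('a::ab_group_add \<Rightarrow> real) set \<Rightarrow> 'a filter \<Rightarrow> bool" where
  "sn_cauchy P F \<longleftrightarrow> (\<forall>p\<in>P. \<forall>e>0. eventually (\<lambda>(x, y). p (x - y) < e) (F \<times>\<^sub>F F))"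

definition sn_converges :: "('a::ab_group_add \<Rightarrow> real) set \<Rightarrow> 'a filter \<Rightarrow> 'a \<Rightarrow> bool" where
  "sn_converges P F a \<longleftrightarrow> (\<forall>p\<in>P. \<forall>e>0. eventually (\<lambda>x. p (x - a) < e) F)"

definition sn_complete_set :: "('a::ab_group_add \<Rightarrow> real) set \<Rightarrow> 'a set \<Rightarrow> bool" where
  "sn_complete_set P A \<longleftrightarrow>
     (\<forall>F. F \<noteq> bot \<and> F \<le> principal A \<and> sn_cauchy P F \<longrightarrow> (\<exists>a\<in>A. sn_converges P F a))"

definition sn_quasi_complete :: "'a::ab_group_add set \<Rightarrow> ('a \<Rightarrow> real) set \<Rightarrow> bool" where
  "sn_quasi_complete V P \<longleftrightarrow>
     (\<forall>A. A \<subseteq> V \<and> closedin (sn_topology V P) A \<and> sn_bounded P A \<longrightarrow> sn_complete_set P A)"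

text \<open>Continuous conjugate-linear functionals (the space V^x) and continuous linear
  functionals, represented extensionally (value 0 outside V).\<close>
definition conj_dual :: "(complex \<Rightarrow> 'a \<Rightarrow> 'a) \<Rightarrow> 'a::ab_group_add set \<Rightarrow> ('a \<Rightarrow> real) set
    \<Rightarrow> ('a \<Rightarrow> complex) set" where
  "conj_dual sc V P = {\<Phi>. (\<forall>x\<in>V. \<forall>y\<in>V. \<Phi> (x + y) = \<Phi> x + \<Phi> y)
      \<and> (\<forall>c. \<forall>x\<in>V. \<Phi> (sc c x) = cnj c * \<Phi> x) \<and> (\<forall>x. x \<notin> V \<longrightarrow> \<Phi> x = 0)
      \<and> continuous_map (sn_topology V P) euclidean \<Phi>}"

definition lin_dual :: "(complex \<Rightarrow> 'a \<Rightarrow> 'a) \<Rightarrow> 'a::ab_group_add set \<Rightarrow> ('a \<Rightarrow> real) set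
    \<Rightarrow> ('a \<Rightarrow> complex) set" where
  "lin_dual sc V P = {\<Phi>. (\<forall>x\<in>V. \<forall>y\<in>V. \<Phi> (x + y) = \<Phi> x + \<Phi> y)
      \<and> (\<forall>c. \<forall>x\<in>V. \<Phi> (sc c x) = c * \<Phi> x) \<and> (\<forall>x. x \<notin> V \<longrightarrow> \<Phi> x = 0)
      \<and> continuous_map (sn_topology V P) euclidean \<Phi>}"

text \<open>Seminorms of the strong dual topology: uniform convergence on bounded subsets of V.\<close>
definition strong_seminorms :: "'a set \<Rightarrow> ('a \<Rightarrow> real) set \<Rightarrow> (('a \<Rightarrow> complex) \<Rightarrow> real) set" where
  "strong_seminorms V P = {(\<lambda>\<Phi>. Sup ((\<lambda>v. cmod (\<Phi> v)) ` B)) | B. B \<noteq> {} \<and> B \<subseteq> V \<and> sn_bounded P B}"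

definition fsc :: "complex \<Rightarrow> ('a \<Rightarrow> complex) \<Rightarrow> 'a \<Rightarrow> complex" where
  "fsc c \<Phi> = (\<lambda>x. c * \<Phi> x)"

text \<open>Reflexivity: the canonical map into the strong bidual (the dual of the strong
  dual, with its strong topology) is a bijective topological isomorphism.\<close>
definition sn_reflexive :: "(complex \<Rightarrow> 'a \<Rightarrow> 'a) \<Rightarrow> 'a::ab_group_add set \<Rightarrow> ('a \<Rightarrow> real) set \<Rightarrow> bool" where
  "sn_reflexive sc V P \<longleftrightarrow>
     (let Vx = conj_dual sc V P; Q = strong_seminorms V P;
          Vxx = lin_dual fsc Vx Q; R = strong_seminorms Vx Q;
          J = (\<lambda>f \<Phi>. if \<Phi> \<in> Vx then \<Phi> f else 0)
      in bij_betw J V Vxx \<and> homeomorphic_map (sn_topology V P) (sn_topology Vxx R) J)"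

definition hnorm :: "('h \<Rightarrow> 'h \<Rightarrow> complex) \<Rightarrow> 'h \<Rightarrow> real" where
  "hnorm ip x = sqrt (Re (ip x x))"

definition htop :: "('h::ab_group_add \<Rightarrow> 'h \<Rightarrow> complex) \<Rightarrow> 'h topology" where
  "htop ip = sn_topology UNIV {hnorm ip}"

text \<open>The type 'h with scalar multiplication sc and inner product ip (linear in the
  first, conjugate-linear in the second argument) is a complex Hilbert space.\<close>
definition complex_hilbert :: "(complex \<Rightarrow> 'h \<Rightarrow> 'h) \<Rightarrow> ('h::ab_group_add \<Rightarrow> 'h \<Rightarrow> complex) \<Rightarrow> bool" where
  "complex_hilbert sc ip \<longleftrightarrow>
     (\<forall>x. sc 1 x = x) \<and> (\<forall>a b x. sc a (sc b x) = sc (a * b) x)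
   \<and> (\<forall>a b x. sc (a + b) x = sc a x + sc b x) \<and> (\<forall>a x y. sc a (x + y) = sc a x + sc a y)
   \<and> (\<forall>x y z. ip (x + y) z = ip x z + ip y z) \<and> (\<forall>a x y. ip (sc a x) y = a * ip x y)
   \<and> (\<forall>x y. ip y x = cnj (ip x y)) \<and> (\<forall>x. Im (ip x x) = 0 \<and> Re (ip x x) \<ge> 0)
   \<and> (\<forall>x. ip x x = 0 \<longrightarrow> x = 0)
   \<and> sn_complete_set {hnorm ip} UNIV"

definition orthonormal_basis :: "(complex \<Rightarrow> 'h \<Rightarrow> 'h) \<Rightarrow> ('h::ab_group_add \<Rightarrow> 'h \<Rightarrow> complex)
    \<Rightarrow> (nat \<Rightarrow> 'h) \<Rightarrow> bool" where
  "orthonormal_basis sc ip e \<longleftrightarrow>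
     (\<forall>n m. ip (e n) (e m) = (if n = m then 1 else 0))
   \<and> (htop ip) closure_of {(\<Sum>i\<in>F. sc (c i) (e i)) | F c. finite F} = UNIV"

text \<open>D[t] \<subset> H \<subset> D^x[t^x]: D a dense subspace of H carrying the locally convex
  topology t given by the seminorms P, finer than the norm topology. The space D^x is
  conj_dual sc D P with the strong topology of strong_seminorms D P; H embeds in
  D^x via f \<mapsto> ip f restricted to D.\<close>
definition rigged_hilbert :: "(complex \<Rightarrow> 'h \<Rightarrow> 'h) \<Rightarrow> ('h::ab_group_add \<Rightarrow> 'h \<Rightarrow> complex)
    \<Rightarrow> 'h set \<Rightarrow> ('h \<Rightarrow> real) set \<Rightarrow> bool" where
  "rigged_hilbert sc ip D P \<longleftrightarrow>
     complex_hilbert sc ip \<and> cvsubspace sc D \<and> (\<forall>p\<in>P. is_seminorm sc D p)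
   \<and> (htop ip) closure_of D = UNIV
   \<and> (\<forall>U. openin (htop ip) U \<longrightarrow> openin (sn_topology D P) (U \<inter> D))"

definition topological_basis_sn :: "(complex \<Rightarrow> 'h \<Rightarrow> 'h) \<Rightarrow> 'h::ab_group_add set
    \<Rightarrow> ('h \<Rightarrow> real) set \<Rightarrow> (nat \<Rightarrow> 'h) \<Rightarrow> bool" where
  "topological_basis_sn sc D P \<xi> \<longleftrightarrow> (\<forall>n. \<xi> n \<in> D) \<and>
     (\<forall>f\<in>D. \<exists>!c. limitin (sn_topology D P) (\<lambda>N. \<Sum>n<N. sc (c n) (\<xi> n)) f sequentially)"

definition basis_coeff :: "(complex \<Rightarrow> 'h \<Rightarrow> 'h) \<Rightarrow> 'h::ab_group_add set
    \<Rightarrow> ('h \<Rightarrow> real) set \<Rightarrow> (nat \<Rightarrow> 'h) \<Rightarrow> nat \<Rightarrow> 'h \<Rightarrow> complex" where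
  "basis_coeff sc D P \<xi> n f =
     (THE c. limitin (sn_topology D P) (\<lambda>N. \<Sum>k<N. sc (c k) (\<xi> k)) f sequentially) n"

definition schauder_basis_sn :: "(complex \<Rightarrow> 'h \<Rightarrow> 'h) \<Rightarrow> 'h::ab_group_add set
    \<Rightarrow> ('h \<Rightarrow> real) set \<Rightarrow> (nat \<Rightarrow> 'h) \<Rightarrow> bool" where
  "schauder_basis_sn sc D P \<xi> \<longleftrightarrow> topological_basis_sn sc D P \<xi> \<and>
     (\<forall>n. continuous_map (sn_topology D P) euclidean (basis_coeff sc D P \<xi> n))"

definition in_C_DH :: "(complex \<Rightarrow> 'h \<Rightarrow> 'h) \<Rightarrow> ('h::ab_group_add \<Rightarrow> 'h \<Rightarrow> complex)
    \<Rightarrow> 'h set \<Rightarrow> ('h \<Rightarrow> real) set \<Rightarrow> ('h \<Rightarrow> 'h) \<Rightarrow> bool" where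
  "in_C_DH sc ip D P T \<longleftrightarrow> (\<forall>x\<in>D. \<forall>y\<in>D. T (x + y) = T x + T y)
     \<and> (\<forall>c. \<forall>x\<in>D. T (sc c x) = sc c (T x))
     \<and> continuous_map (sn_topology D P) (htop ip) T"

definition riesz_like_basis :: "(complex \<Rightarrow> 'h \<Rightarrow> 'h) \<Rightarrow> ('h::ab_group_add \<Rightarrow> 'h \<Rightarrow> complex)
    \<Rightarrow> 'h set \<Rightarrow> ('h \<Rightarrow> real) set \<Rightarrow> (nat \<Rightarrow> 'h) \<Rightarrow> bool" where
  "riesz_like_basis sc ip D P \<xi> \<longleftrightarrow> schauder_basis_sn sc D P \<xi> \<and>
     (\<exists>T. in_C_DH sc ip D P T \<and> inj_on T D \<and> orthonormal_basis sc ip (\<lambda>n. T (\<xi> n)))"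

definition in_L_DDx :: "(complex \<Rightarrow> 'h \<Rightarrow> 'h) \<Rightarrow> 'h::ab_group_add set \<Rightarrow> ('h \<Rightarrow> real) set
    \<Rightarrow> ('h \<Rightarrow> 'h \<Rightarrow> complex) \<Rightarrow> bool" where
  "in_L_DDx sc D P S \<longleftrightarrow> (\<forall>x\<in>D. S x \<in> conj_dual sc D P)
     \<and> (\<forall>x\<in>D. \<forall>y\<in>D. S (x + y) = S x + S y) \<and> (\<forall>c. \<forall>x\<in>D. S (sc c x) = fsc c (S x))
     \<and> continuous_map (sn_topology D P) (sn_topology (conj_dual sc D P) (strong_seminorms D P)) S"

end

theory Submission
  imports Defs
begin

locale hil =
  fixes sc :: "complex \<Rightarrow> 'h::ab_group_add \<Rightarrow> 'h" and ip :: "'h \<Rightarrow> 'h \<Rightarrow> complex"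
  assumes H: "complex_hilbert sc ip"
begin

lemmas Hd = H[unfolded complex_hilbert_def]

lemma sc_one[simp]: "sc 1 x = x" using conjunct1[OF Hd] by blast
lemma sc_assoc: "sc a (sc b x) = sc (a * b) x" using conjunct1[OF conjunct2[OF Hd]] by blast
lemma sc_add_left: "sc (a + b) x = sc a x + sc b x" using conjunct1[OF conjunct2[OF conjunct2[OF Hd]]] by blast
lemma sc_add_right: "sc a (x + y) = sc a x + sc a y" using conjunct1[OF conjunct2[OF conjunct2[OF conjunct2[OF Hd]]]] by blast
lemma ip_add_left: "ip (x + y) z = ip x z + ip y z" using conjunct1[OF conjunct2[OF conjunct2[OF conjunct2[OF conjunct2[OF Hd]]]]] by blast
lemma ip_sc_left: "ip (sc a x) y = a * ip x y" using conjunct1[OF conjunct2[OF conjunct2[OF conjunct2[OF conjunct2[OF conjunct2[OF Hd]]]]]] by blast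
lemma ip_sym: "ip y x = cnj (ip x y)" using conjunct1[OF conjunct2[OF conjunct2[OF conjunct2[OF conjunct2[OF conjunct2[OF conjunct2[OF Hd]]]]]]] by blast
lemma ip_self_Im: "Im (ip x x) = 0" using conjunct1[OF conjunct2[OF conjunct2[OF conjunct2[OF conjunct2[OF conjunct2[OF conjunct2[OF conjunct2[OF Hd]]]]]]]] by blast
lemma ip_self_Re: "Re (ip x x) \<ge> 0" using conjunct1[OF conjunct2[OF conjunct2[OF conjunct2[OF conjunct2[OF conjunct2[OF conjunct2[OF conjunct2[OF Hd]]]]]]]] by blast
lemma ip_self_zero: "ip x x = 0 \<Longrightarrow> x = 0" using conjunct1[OF conjunct2[OF conjunct2[OF conjunct2[OF conjunct2[OF conjunct2[OF conjunct2[OF conjunct2[OF conjunct2[OF Hd]]]]]]]]] by blast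
lemma complete_H: "sn_complete_set {hnorm ip} UNIV" by (rule conjunct2[OF conjunct2[OF conjunct2[OF conjunct2[OF conjunct2[OF conjunct2[OF conjunct2[OF conjunct2[OF conjunct2[OF Hd]]]]]]]]])

lemma sc_zero_left[simp]: "sc 0 x = 0"
proof -
  have "sc (0+0) x = sc 0 x + sc 0 x" by (rule sc_add_left)
  then show ?thesis by simp
qed

lemma sc_zero_right[simp]: "sc c 0 = 0"
proof -
  have "sc c (0+0) = sc c 0 + sc c 0" by (rule sc_add_right)
  then show ?thesis by simp
qed

lemma sc_minus_one: "sc (-1) x = - x"
proof -
  have "sc (1 + -1) x = sc 1 x + sc (-1) x" by (rule sc_add_left)
  then have "0 = x + sc (-1) x" by simp
  then show ?thesis by (metis add.commute add_eq_0_iff)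
qed

lemma sc_minus_right: "sc c (- x) = - sc c x"
  by (metis sc_assoc sc_minus_one mult.commute)

lemma sc_diff_right: "sc c (x - y) = sc c x - sc c y"
  using sc_add_right[of c x "-y"] sc_minus_right[of c y] by simp

lemma sc_minus_left: "sc (- a) x = - sc a x"
  by (metis mult_minus1_right sc_assoc sc_minus_one mult.commute sc_one mult_1_right)

lemma sc_diff_left: "sc (a - b) x = sc a x - sc b x"
  using sc_add_left[of a "-b" x] sc_minus_left[of b x] by simp

lemma sc_sum_right: "sc c (\<Sum>i\<in>A. f i) = (\<Sum>i\<in>A. sc c (f i))"
  by (induction A rule: infinite_finite_induct) (auto simp: sc_add_right)

lemma sc_sum_left: "sc (\<Sum>i\<in>A. f i) x = (\<Sum>i\<in>A. sc (f i) x)"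
  by (induction A rule: infinite_finite_induct) (auto simp: sc_add_left)

lemma ip_add_right: "ip z (x + y) = ip z x + ip z y"
  by (metis ip_sym ip_add_left complex_cnj_add)

lemma ip_sc_right: "ip x (sc a y) = cnj a * ip x y"
  by (metis ip_sym ip_sc_left complex_cnj_mult)

lemma ip_zero_left[simp]: "ip 0 y = 0"
  by (metis ip_sc_left mult_zero_left sc_zero_left)

lemma ip_zero_right[simp]: "ip y 0 = 0"
  by (metis ip_sym ip_zero_left complex_cnj_zero)

lemma ip_minus_left: "ip (- x) y = - ip x y"
  by (metis ip_sc_left sc_minus_one mult_minus1)

lemma ip_minus_right: "ip y (- x) = - ip y x"
  by (metis ip_sym ip_minus_left complex_cnj_minus)

lemma ip_diff_left: "ip (x - y) z = ip x z - ip y z"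
  using ip_add_left[of x "-y" z] ip_minus_left[of y z] by simp

lemma ip_diff_right: "ip z (x - y) = ip z x - ip z y"
  using ip_add_right[of z x "-y"] ip_minus_right[of z y] by simp

lemma ip_sum_left: "ip (\<Sum>i\<in>A. f i) y = (\<Sum>i\<in>A. ip (f i) y)"
  by (induction A rule: infinite_finite_induct) (auto simp: ip_add_left)

lemma ip_sum_right: "ip y (\<Sum>i\<in>A. f i) = (\<Sum>i\<in>A. ip y (f i))"
  by (induction A rule: infinite_finite_induct) (auto simp: ip_add_right)

lemma ip_self_real: "ip x x = complex_of_real (Re (ip x x))"
  using ip_self_Im by (simp add: complex_eq_iff)

lemma hnorm_sq: "(hnorm ip x)\<^sup>2 = Re (ip x x)"
  unfolding hnorm_def using ip_self_Re by simp

lemma hnorm_nonneg: "hnorm ip x \<ge> 0" unfolding hnorm_def using ip_self_Re by simp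

lemma ip_self_hnorm: "ip x x = complex_of_real ((hnorm ip x)\<^sup>2)"
  using ip_self_real hnorm_sq by simp

lemma hnorm_zero[simp]: "hnorm ip 0 = 0" unfolding hnorm_def by simp

lemma hnorm_eq_zero: "hnorm ip x = 0 \<longleftrightarrow> x = 0"
  by (metis hnorm_zero ip_self_hnorm ip_self_zero of_real_0 zero_power2)

lemma hnorm_sc: "hnorm ip (sc c x) = cmod c * hnorm ip x"
proof -
  have "ip (sc c x) (sc c x) = (c * cnj c) * ip x x" by (simp add: ip_sc_left ip_sc_right)
  also have "\<dots> = complex_of_real ((cmod c)\<^sup>2 * (hnorm ip x)\<^sup>2)"
    unfolding ip_self_hnorm[of x] using complex_norm_square[of c] by simp
  finally have "complex_of_real ((hnorm ip (sc c x))\<^sup>2) = complex_of_real ((cmod c * hnorm ip x)\<^sup>2)"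
    using ip_self_hnorm[of "sc c x"] by (simp add: power_mult_distrib)
  then have "(hnorm ip (sc c x))\<^sup>2 = (cmod c * hnorm ip x)\<^sup>2" using of_real_eq_iff by blast
  then show ?thesis using hnorm_nonneg by (simp add: power2_eq_iff_nonneg)
qed

lemma hnorm_minus: "hnorm ip (- x) = hnorm ip x"
  using hnorm_sc[of "-1" x] by (simp add: sc_minus_one)

lemma hnorm_commute: "hnorm ip (x - y) = hnorm ip (y - x)"
  by (metis hnorm_minus minus_diff_eq)

lemma cauchy_schwarz: "cmod (ip x y) \<le> hnorm ip x * hnorm ip y"
proof (cases "y = 0")
  case True then show ?thesis by (simp add: hnorm_nonneg)
next
  case False
  define t where "t = ip x y / ip y y"
  have yy: "ip y y = complex_of_real ((hnorm ip y)\<^sup>2)" by (rule ip_self_hnorm)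
  have ny: "hnorm ip y > 0" using False hnorm_eq_zero hnorm_nonneg by (metis less_eq_real_def)
  have "0 \<le> Re (ip (x - sc t y) (x - sc t y))" by (rule ip_self_Re)
  also have "ip (x - sc t y) (x - sc t y) = ip x x - cnj t * ip x y - t * ip y x + t * cnj t * ip y y"
    by (simp add: ip_diff_left ip_diff_right ip_sc_left ip_sc_right algebra_simps)
  also have "t * cnj t * ip y y = cnj t * ip x y"
    using ny by (simp add: t_def yy field_simps)
  also have "t * ip y x = ip x y * cnj (ip x y) / ip y y"
    by (simp add: t_def ip_sym[of y x])
  finally have "0 \<le> Re (ip x x) - Re (ip x y * cnj (ip x y) / ip y y)" by simp
  also have "ip x y * cnj (ip x y) / ip y y = complex_of_real ((cmod (ip x y))\<^sup>2 / (hnorm ip y)\<^sup>2)"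
    using complex_norm_square[of "ip x y"] by (simp add: yy)
  finally have "(cmod (ip x y))\<^sup>2 / (hnorm ip y)\<^sup>2 \<le> (hnorm ip x)\<^sup>2"
    by (simp add: hnorm_sq)
  then have "(cmod (ip x y))\<^sup>2 \<le> (hnorm ip x)\<^sup>2 * (hnorm ip y)\<^sup>2"
    using ny by (simp add: field_simps)
  then have "(cmod (ip x y))\<^sup>2 \<le> (hnorm ip x * hnorm ip y)\<^sup>2" by (simp add: power_mult_distrib)
  then show ?thesis
    using hnorm_nonneg by (meson mult_nonneg_nonneg power2_le_imp_le)
qed

lemma hnorm_triangle: "hnorm ip (x + y) \<le> hnorm ip x + hnorm ip y"
proof -
  have "ip (x+y) (x+y) = ip x x + ip x y + ip y x + ip y y"
    by (simp add: ip_add_left ip_add_right)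
  then have "Re (ip (x+y) (x+y)) = Re (ip x x) + Re (ip y y) + 2 * Re (ip x y)"
    by (simp add: ip_sym[of y x])
  also have "Re (ip x y) \<le> hnorm ip x * hnorm ip y"
    using cauchy_schwarz[of x y] complex_Re_le_cmod by (meson order_trans)
  finally have "(hnorm ip (x+y))\<^sup>2 \<le> (hnorm ip x + hnorm ip y)\<^sup>2"
    by (simp add: hnorm_sq power2_sum)
  then show ?thesis using hnorm_nonneg by (meson add_nonneg_nonneg power2_le_imp_le)
qed

lemma hnorm_triangle_diff: "hnorm ip (x - z) \<le> hnorm ip (x - y) + hnorm ip (y - z)"
  using hnorm_triangle[of "x - y" "y - z"] by simp

lemma hnorm_rev_triangle: "\<bar>hnorm ip x - hnorm ip y\<bar> \<le> hnorm ip (x - y)"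
  using hnorm_triangle[of "x - y" y] hnorm_triangle[of "y - x" x] hnorm_commute[of x y]
  by (simp add: abs_le_iff)

end

definition sball :: "'a::ab_group_add set \<Rightarrow> ('a \<Rightarrow> real) set \<Rightarrow> 'a \<Rightarrow> real \<Rightarrow> 'a set" where
  "sball V F x e = {y \<in> V. \<forall>p\<in>F. p (y - x) < e}"

definition semi_ok :: "'a::ab_group_add set \<Rightarrow> ('a \<Rightarrow> real) set \<Rightarrow> bool" where
  "semi_ok V P \<longleftrightarrow> (\<forall>p\<in>P. p 0 = 0 \<and> (\<forall>x\<in>V. \<forall>y\<in>V. \<forall>z\<in>V. p (x - z) \<le> p (x - y) + p (y - z)))"

lemma sn_topspace: "topspace (sn_topology V P) = V"
proof
  show "topspace (sn_topology V P) \<subseteq> V"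
    unfolding sn_topology_def topology_generated_by_topspace by auto
  show "V \<subseteq> topspace (sn_topology V P)"
  proof
    fix x assume "x \<in> V"
    then have "V \<in> {{y \<in> V. \<forall>p\<in>F. p (y - x) < e} | x F e. x \<in> V \<and> finite F \<and> F \<subseteq> P \<and> e > 0}"
      by (intro CollectI exI[of _ x] exI[of _ "{}"] exI[of _ "1::real"]) auto
    then show "x \<in> topspace (sn_topology V P)" using \<open>x \<in> V\<close>
      unfolding sn_topology_def topology_generated_by_topspace by blast
  qed
qed

lemma sball_open:
  assumes "x \<in> V" "finite F" "F \<subseteq> P" "e > 0"
  shows "openin (sn_topology V P) (sball V F x e)"
  unfolding sn_topology_def sball_def
  by (rule topology_generated_by_Basis) (use assms in blast)

lemma sball_sub: "sball V F x e \<subseteq> V" unfolding sball_def by auto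

lemma sball_center: "semi_ok V P \<Longrightarrow> x \<in> V \<Longrightarrow> F \<subseteq> P \<Longrightarrow> e > 0 \<Longrightarrow> x \<in> sball V F x e"
  unfolding sball_def semi_ok_def by (auto dest!: subsetD)

lemma sn_openI:
  assumes ok: "semi_ok V P" and sub: "U \<subseteq> V"
    and h: "\<And>x. x \<in> U \<Longrightarrow> \<exists>F e. finite F \<and> F \<subseteq> P \<and> e > 0 \<and> sball V F x e \<subseteq> U"
  shows "openin (sn_topology V P) U"
proof (subst openin_subopen, intro ballI)
  fix x assume "x \<in> U"
  then obtain F e where Fe: "finite F" "F \<subseteq> P" "e > 0" "sball V F x e \<subseteq> U" using h by meson
  have xV: "x \<in> V" using \<open>x \<in> U\<close> sub by blast
  have "x \<in> sball V F x e" using sball_center[OF ok xV Fe(2,3)] .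
  moreover have "openin (sn_topology V P) (sball V F x e)"
    using sball_open[OF xV Fe(1,2,3)] .
  ultimately show "\<exists>T. openin (sn_topology V P) T \<and> x \<in> T \<and> T \<subseteq> U" using Fe(4) by blast
qed

lemma min_margin:
  fixes e :: real
  assumes "finite F" "\<forall>p\<in>F. g p < e" "e > 0"
  shows "\<exists>d>0. \<forall>p\<in>F. g p + d \<le> e"
proof -
  define d where "d = Min (insert e ((\<lambda>p. e - g p) ` F))"
  have "d > 0" unfolding d_def using assms by (subst Min_gr_iff) auto
  moreover have "\<forall>p\<in>F. g p + d \<le> e"
  proof
    fix p assume "p \<in> F"
    then have "d \<le> e - g p" unfolding d_def using assms(1) by (intro Min_le) auto
    then show "g p + d \<le> e" by simp
  qed
  ultimately show ?thesis by blast
qed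

lemma sn_openD:
  assumes ok: "semi_ok V P" and op: "openin (sn_topology V P) U" and x: "x \<in> U"
  shows "\<exists>F e. finite F \<and> F \<subseteq> P \<and> e > 0 \<and> sball V F x e \<subseteq> U"
proof -
  have g: "generate_topology_on {{y \<in> V. \<forall>p\<in>F. p (y - x) < e} | x F e. x \<in> V \<and> finite F \<and> F \<subseteq> P \<and> e > 0} U"
    using op unfolding sn_topology_def by (rule openin_topology_generated_by)
  have "\<forall>x\<in>U. x \<in> V \<longrightarrow> (\<exists>F e. finite F \<and> F \<subseteq> P \<and> e > 0 \<and> sball V F x e \<subseteq> U)"
    using g
  proof (induction rule: generate_topology_on.induct)
    case Empty then show ?case by simp
  next
    case (Int a b)
    show ?case
    proof (intro ballI impI)
      fix x assume xab: "x \<in> a \<inter> b" and xV: "x \<in> V"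
      obtain F1 e1 where 1: "finite F1" "F1 \<subseteq> P" "e1 > 0" "sball V F1 x e1 \<subseteq> a"
        using Int.IH(1) xab xV by (meson IntD1)
      obtain F2 e2 where 2: "finite F2" "F2 \<subseteq> P" "e2 > 0" "sball V F2 x e2 \<subseteq> b"
        using Int.IH(2) xab xV by (meson IntD2)
      have "sball V (F1 \<union> F2) x (min e1 e2) \<subseteq> a \<inter> b"
        using 1(4) 2(4) unfolding sball_def by auto
      moreover have "finite (F1 \<union> F2)" "F1 \<union> F2 \<subseteq> P" "min e1 e2 > 0" using 1 2 by auto
      ultimately show "\<exists>F e. finite F \<and> F \<subseteq> P \<and> e > 0 \<and> sball V F x e \<subseteq> a \<inter> b"
        by meson
    qed
  next
    case (UN K)
    show ?case
    proof (intro ballI impI)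
      fix x assume "x \<in> \<Union>K" "x \<in> V"
      then obtain k where "k \<in> K" "x \<in> k" by auto
      then obtain F e where "finite F" "F \<subseteq> P" "e > 0" "sball V F x e \<subseteq> k"
        using UN.IH \<open>x \<in> V\<close> by meson
      moreover have "k \<subseteq> \<Union>K" using \<open>k \<in> K\<close> by auto
      ultimately show "\<exists>F e. finite F \<and> F \<subseteq> P \<and> e > 0 \<and> sball V F x e \<subseteq> \<Union>K"
        by (meson order_trans)
    qed
  next
    case (Basis s)
    then obtain x0 F0 e0 where s: "s = {y \<in> V. \<forall>p\<in>F0. p (y - x0) < e0}" "x0 \<in> V" "finite F0"
      "F0 \<subseteq> P" "e0 > 0" by auto
    show ?case
    proof (intro ballI impI)
      fix x assume "x \<in> s" "x \<in> V"
      then have "\<forall>p\<in>F0. p (x - x0) < e0" using s by blast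
      then obtain d where d: "d > 0" "\<forall>p\<in>F0. p (x - x0) + d \<le> e0"
        using min_margin[OF s(3), of "\<lambda>p. p (x - x0)"] s(5) by blast
      have "sball V F0 x d \<subseteq> s"
      proof
        fix y assume y: "y \<in> sball V F0 x d"
        then have "y \<in> V" unfolding sball_def by blast
        have "\<forall>p\<in>F0. p (y - x0) < e0"
        proof
          fix p assume "p \<in> F0"
          then have "p (y - x0) \<le> p (y - x) + p (x - x0)"
            using ok s(4) \<open>y \<in> V\<close> \<open>x \<in> V\<close> s(2) unfolding semi_ok_def by blast
          moreover have "p (y - x) < d" using y \<open>p \<in> F0\<close> unfolding sball_def by blast
          ultimately show "p (y - x0) < e0" using d \<open>p \<in> F0\<close> by fastforce
        qed
        then show "y \<in> s" using s(1) \<open>y \<in> V\<close> by blast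
      qed
      then show "\<exists>F e. finite F \<and> F \<subseteq> P \<and> e > 0 \<and> sball V F x e \<subseteq> s"
        using s d by blast
    qed
  qed
  moreover have "x \<in> V" using openin_subset[OF op] x sn_topspace by blast
  ultimately show ?thesis using x by blast
qed

lemma sn_limitin_iff:
  assumes ok: "semi_ok V P"
  shows "limitin (sn_topology V P) s l sequentially \<longleftrightarrow>
    l \<in> V \<and> (\<forall>F e. finite F \<and> F \<subseteq> P \<and> e > 0 \<longrightarrow> eventually (\<lambda>n. s n \<in> sball V F l e) sequentially)"
proof
  assume lim: "limitin (sn_topology V P) s l sequentially"
  then have l: "l \<in> V" using sn_topspace limitin_topspace by metis
  show "l \<in> V \<and> (\<forall>F e. finite F \<and> F \<subseteq> P \<and> e > 0 \<longrightarrow> eventually (\<lambda>n. s n \<in> sball V F l e) sequentially)"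
  proof (intro conjI l allI impI)
    fix F e assume "finite F \<and> F \<subseteq> P \<and> (e::real) > 0"
    then have "openin (sn_topology V P) (sball V F l e)" "l \<in> sball V F l e"
      using sball_open sball_center[OF ok] l by auto
    then show "eventually (\<lambda>n. s n \<in> sball V F l e) sequentially"
      using lim unfolding limitin_def by simp
  qed
next
  assume h: "l \<in> V \<and> (\<forall>F e. finite F \<and> F \<subseteq> P \<and> e > 0 \<longrightarrow> eventually (\<lambda>n. s n \<in> sball V F l e) sequentially)"
  show "limitin (sn_topology V P) s l sequentially"
    unfolding limitin_def sn_topspace
  proof (intro conjI allI impI)
    show "l \<in> V" using h by (rule conjunct1)
    fix U assume "openin (sn_topology V P) U \<and> l \<in> U"
    then obtain F e where "finite F" "F \<subseteq> P" "e > 0" "sball V F l e \<subseteq> U"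
      using sn_openD[OF ok] by meson
    then have "eventually (\<lambda>n. s n \<in> sball V F l e) sequentially"
      using h by simp
    then show "eventually (\<lambda>n. s n \<in> U) sequentially"
      using \<open>sball V F l e \<subseteq> U\<close> by (auto elim: eventually_mono)
  qed
qed

lemma sn_cont_metricI:
  fixes f :: "'a::ab_group_add \<Rightarrow> 'b::metric_space"
  assumes ok: "semi_ok V P"
    and h: "\<And>x \<epsilon>. x \<in> V \<Longrightarrow> \<epsilon> > 0 \<Longrightarrow> \<exists>F e. finite F \<and> F \<subseteq> P \<and> e > 0 \<and> (\<forall>y\<in>sball V F x e. dist (f y) (f x) < \<epsilon>)"
  shows "continuous_map (sn_topology V P) euclidean f"
  unfolding continuous_map_def sn_topspace
proof (intro conjI allI impI)
  show "f \<in> V \<rightarrow> topspace euclidean" by simp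
  fix U :: "'b set" assume "openin euclidean U"
  then have oU: "open U" by simp
  show "openin (sn_topology V P) {x \<in> V. f x \<in> U}"
  proof (rule sn_openI[OF ok])
    fix x assume "x \<in> {x \<in> V. f x \<in> U}"
    then have "x \<in> V" "f x \<in> U" by auto
    then obtain \<epsilon> where "\<epsilon> > 0" "ball (f x) \<epsilon> \<subseteq> U" using oU open_contains_ball by meson
    then obtain F e where "finite F" "F \<subseteq> P" "e > 0" "\<forall>y\<in>sball V F x e. dist (f y) (f x) < \<epsilon>"
      using h[OF \<open>x \<in> V\<close>] by meson
    moreover have "sball V F x e \<subseteq> {x \<in> V. f x \<in> U}"
      using calculation \<open>ball (f x) \<epsilon> \<subseteq> U\<close> sball_sub by (fastforce simp: dist_commute)
    ultimately show "\<exists>F e. finite F \<and> F \<subseteq> P \<and> e > 0 \<and> sball V F x e \<subseteq> {x \<in> V. f x \<in> U}" by blast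
  qed auto
qed

lemma sn_cont_metricD:
  fixes f :: "'a::ab_group_add \<Rightarrow> 'b::metric_space"
  assumes ok: "semi_ok V P" and c: "continuous_map (sn_topology V P) euclidean f"
    and x: "x \<in> V" and eps: "\<epsilon> > 0"
  shows "\<exists>F e. finite F \<and> F \<subseteq> P \<and> e > 0 \<and> (\<forall>y\<in>sball V F x e. dist (f y) (f x) < \<epsilon>)"
proof -
  have "openin (sn_topology V P) {y \<in> V. f y \<in> ball (f x) \<epsilon>}"
    using c unfolding continuous_map_def sn_topspace by (metis open_ball open_openin)
  moreover have "x \<in> {y \<in> V. f y \<in> ball (f x) \<epsilon>}" using x eps by simp
  ultimately obtain F e where "finite F" "F \<subseteq> P" "e > 0" "sball V F x e \<subseteq> {y \<in> V. f y \<in> ball (f x) \<epsilon>}"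
    using sn_openD[OF ok] by meson
  then show ?thesis by (auto simp: dist_commute)
qed

locale rctx = hil sc ip for sc :: "complex \<Rightarrow> 'h::ab_group_add \<Rightarrow> 'h" and ip +
  fixes D :: "'h set" and P :: "('h \<Rightarrow> real) set"
  assumes rhs: "rigged_hilbert sc ip D P"
begin

lemma cvD: "cvsubspace sc D" using rhs unfolding rigged_hilbert_def by (elim conjE)
lemma semP: "p \<in> P \<Longrightarrow> is_seminorm sc D p" using rhs unfolding rigged_hilbert_def by (elim conjE) simp
lemma denseD: "(htop ip) closure_of D = UNIV" using rhs unfolding rigged_hilbert_def by (elim conjE)
lemma finer: "openin (htop ip) U \<Longrightarrow> openin (sn_topology D P) (U \<inter> D)"
  using rhs unfolding rigged_hilbert_def by (elim conjE) simp

lemma D0[simp]: "0 \<in> D" using cvD unfolding cvsubspace_def by (elim conjE)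
lemma Dadd: "x \<in> D \<Longrightarrow> y \<in> D \<Longrightarrow> x + y \<in> D" using cvD unfolding cvsubspace_def by (elim conjE) simp
lemma Dsc: "x \<in> D \<Longrightarrow> sc c x \<in> D" using cvD unfolding cvsubspace_def by (elim conjE) simp
lemma Dminus: "x \<in> D \<Longrightarrow> - x \<in> D" using Dsc[of x "-1"] by (simp add: sc_minus_one)
lemma Ddiff: "x \<in> D \<Longrightarrow> y \<in> D \<Longrightarrow> x - y \<in> D"
  using Dadd[of x "- y"] Dminus[of y] by simp
lemma Dsum: "(\<And>i. i \<in> A \<Longrightarrow> f i \<in> D) \<Longrightarrow> sum f A \<in> D"
  by (induction A rule: infinite_finite_induct) (auto intro: Dadd)

lemma p_nonneg: "p \<in> P \<Longrightarrow> x \<in> D \<Longrightarrow> p x \<ge> 0"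
  using semP[of p] unfolding is_seminorm_def by simp
lemma p_sc: "p \<in> P \<Longrightarrow> x \<in> D \<Longrightarrow> p (sc c x) = cmod c * p x"
  using semP[of p] unfolding is_seminorm_def by simp
lemma p_tri: "p \<in> P \<Longrightarrow> x \<in> D \<Longrightarrow> y \<in> D \<Longrightarrow> p (x + y) \<le> p x + p y"
  using semP[of p] unfolding is_seminorm_def by simp
lemma p_zero: "p \<in> P \<Longrightarrow> p 0 = 0"
  using p_sc[of p 0 0] by simp
lemma p_minus: "p \<in> P \<Longrightarrow> x \<in> D \<Longrightarrow> p (- x) = p x"
  using p_sc[of p x "-1"] by (simp add: sc_minus_one)
lemma p_tri_diff: "p \<in> P \<Longrightarrow> x \<in> D \<Longrightarrow> y \<in> D \<Longrightarrow> z \<in> D \<Longrightarrow> p (x - z) \<le> p (x - y) + p (y - z)"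
  using p_tri[of p "x - y" "y - z"] Ddiff by simp
lemma p_commute: "p \<in> P \<Longrightarrow> x \<in> D \<Longrightarrow> y \<in> D \<Longrightarrow> p (x - y) = p (y - x)"
  using p_minus[of p "y - x"] Ddiff by simp

lemma okD: "semi_ok D P"
  unfolding semi_ok_def using p_zero p_tri_diff by blast

lemma okH: "semi_ok UNIV {hnorm ip}"
  unfolding semi_ok_def using hnorm_triangle_diff by simp

lemma topD[simp]: "topspace (sn_topology D P) = D" by (rule sn_topspace)
lemma topH[simp]: "topspace (htop ip) = UNIV" unfolding htop_def by (rule sn_topspace)

lemma hball_open: "openin (htop ip) {y. hnorm ip (y - x) < e}"
proof (cases "e > 0")
  case True
  have "openin (htop ip) (sball UNIV {hnorm ip} x e)"
    unfolding htop_def by (rule sball_open) (use True in auto)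
  then show ?thesis unfolding sball_def by simp
next
  case False
  then have "{y. hnorm ip (y - x) < e} = {}" using hnorm_nonneg by (auto simp: not_less intro: order.trans)
  then show ?thesis by simp
qed

lemma lim_to_H:
  assumes "limitin (sn_topology D P) s f sequentially" "e > 0"
  shows "eventually (\<lambda>n. hnorm ip (s n - f) < e) sequentially"
proof -
  have f: "f \<in> D" using limitin_topspace[OF assms(1)] by simp
  have "openin (sn_topology D P) ({y. hnorm ip (y - f) < e} \<inter> D)"
    by (rule finer[OF hball_open])
  moreover have "f \<in> {y. hnorm ip (y - f) < e} \<inter> D" using f assms(2) by simp
  ultimately have "eventually (\<lambda>n. s n \<in> {y. hnorm ip (y - f) < e} \<inter> D) sequentially"
    using assms(1) unfolding limitin_def by meson
  then show ?thesis by (auto elim: eventually_mono)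
qed

lemma dominate:
  assumes q0: "\<And>y. y \<in> D \<Longrightarrow> q y \<ge> 0"
    and qh: "\<And>c y. y \<in> D \<Longrightarrow> q (sc c y) = cmod c * q y"
    and F: "finite F" "F \<subseteq> P" and e: "e > 0"
    and b: "\<And>y. y \<in> sball D F 0 e \<Longrightarrow> q y \<le> 1"
    and y: "y \<in> D"
  shows "q y \<le> (2 / e) * (\<Sum>p\<in>F. p y)"
proof -
  define s where "s = (\<Sum>p\<in>F. p y)"
  have s0: "s \<ge> 0" unfolding s_def using F y p_nonneg by (auto intro: sum_nonneg)
  show ?thesis
  proof (cases "s = 0")
    case True
    then have pz: "\<forall>p\<in>F. p y = 0"
      using F y p_nonneg unfolding s_def by (subst (asm) sum_nonneg_eq_0_iff) auto
    show ?thesis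
    proof (rule ccontr)
      assume "\<not> ?thesis"
      then have qpos: "q y > 0" using True s_def by simp
      define t where "t = 2 / q y"
      have "\<forall>p\<in>F. p (sc (complex_of_real t) y - 0) < e"
      proof
        fix p assume "p \<in> F"
        then have "p \<in> P" using F(2) by blast
        then have "p y = 0" using pz \<open>p \<in> F\<close> by blast
        then show "p (sc (complex_of_real t) y - 0) < e" using \<open>p \<in> P\<close> p_sc[of p y] y e by simp
      qed
      then have "sc (complex_of_real t) y \<in> sball D F 0 e"
        unfolding sball_def using y Dsc by simp
      then have "q (sc (complex_of_real t) y) \<le> 1" by (rule b)
      then have "\<bar>t\<bar> * q y \<le> 1" using qh[OF y] by simp
      then show False using qpos unfolding t_def by simp
    qed
  next
    case False
    then have spos: "s > 0" using s0 by simp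
    define t where "t = e / (2 * s)"
    have tpos: "t > 0" unfolding t_def using spos e by simp
    have "\<forall>p\<in>F. p y \<le> s" unfolding s_def
    proof
      fix p assume "p \<in> F"
      show "p y \<le> (\<Sum>p\<in>F. p y)"
        by (rule member_le_sum[OF \<open>p \<in> F\<close> _ F(1)]) (use F(2) y p_nonneg in blast)
    qed
    then have "\<forall>p\<in>F. t * p y < e"
    proof -
      assume h: "\<forall>p\<in>F. p y \<le> s"
      have "t * s < e" unfolding t_def using spos e by (simp add: field_simps)
      then show ?thesis using h tpos by (meson le_less_trans mult_left_mono less_imp_le)
    qed
    then have "\<forall>p\<in>F. p (sc (complex_of_real t) y - 0) < e"
    proof -
      assume h: "\<forall>p\<in>F. t * p y < e"
      show ?thesis
      proof
        fix p assume "p \<in> F"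
        then have "p \<in> P" using F(2) by blast
        then show "p (sc (complex_of_real t) y - 0) < e" using h \<open>p \<in> F\<close> p_sc[of p y] y tpos by simp
      qed
    qed
    then have "sc (complex_of_real t) y \<in> sball D F 0 e"
      unfolding sball_def using y Dsc by simp
    then have "q (sc (complex_of_real t) y) \<le> 1" by (rule b)
    then have "t * q y \<le> 1" using qh[OF y] tpos by simp
    then have "q y \<le> 1 / t" using tpos by (simp add: field_simps)
    then show ?thesis unfolding t_def s_def by (simp add: field_simps)
  qed
qed

lemma cont_dominate:
  assumes c: "continuous_map (sn_topology D P) euclidean q"
    and q0: "\<And>y. y \<in> D \<Longrightarrow> q y \<ge> 0"
    and qh: "\<And>c y. y \<in> D \<Longrightarrow> q (sc c y) = cmod c * q y"
  shows "\<exists>F C. finite F \<and> F \<subseteq> P \<and> C \<ge> 0 \<and> (\<forall>y\<in>D. q y \<le> C * (\<Sum>p\<in>F. p y))"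
proof -
  have qz: "q 0 = 0" using qh[of 0 0] by simp
  obtain F e where F: "finite F" "F \<subseteq> P" "e > 0" "\<forall>y\<in>sball D F 0 e. dist (q y) (q 0) < 1"
    using sn_cont_metricD[OF okD c D0, of 1] by auto
  have "\<And>y. y \<in> sball D F 0 e \<Longrightarrow> q y \<le> 1"
    using F(4) qz by (auto simp: dist_real_def)
  then have "\<forall>y\<in>D. q y \<le> (2 / e) * (\<Sum>p\<in>F. p y)"
    using dominate[OF q0 qh F(1,2,3)] by blast
  moreover have "2 / e \<ge> 0" using F(3) by simp
  ultimately show ?thesis using F(1,2) by blast
qed

lemma dom_cont:
  assumes tri: "\<And>x y. x \<in> D \<Longrightarrow> y \<in> D \<Longrightarrow> \<bar>q x - q y\<bar> \<le> q (x - y)"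
    and F: "finite F" "F \<subseteq> P" and C: "C \<ge> 0"
    and dom: "\<And>y. y \<in> D \<Longrightarrow> q y \<le> C * (\<Sum>p\<in>F. p y)"
  shows "continuous_map (sn_topology D P) euclidean q"
proof (rule sn_cont_metricI[OF okD])
  fix x and \<epsilon> :: real assume x: "x \<in> D" and eps: "\<epsilon> > 0"
  define d where "d = \<epsilon> / (C * real (card F) + 1)"
  have dpos: "d > 0" unfolding d_def using eps C by (simp add: add_nonneg_pos)
  have "\<forall>y\<in>sball D F x d. dist (q y) (q x) < \<epsilon>"
  proof
    fix y assume y: "y \<in> sball D F x d"
    then have yD: "y \<in> D" and yl: "\<forall>p\<in>F. p (y - x) < d" unfolding sball_def by auto
    have "(\<Sum>p\<in>F. p (y - x)) \<le> (\<Sum>p\<in>F. d)" using yl by (intro sum_mono) auto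
    also have "\<dots> = real (card F) * d" by simp
    finally have s: "(\<Sum>p\<in>F. p (y - x)) \<le> real (card F) * d" .
    have "\<bar>q y - q x\<bar> \<le> q (y - x)" by (rule tri[OF yD x])
    also have "\<dots> \<le> C * (\<Sum>p\<in>F. p (y - x))" by (rule dom[OF Ddiff[OF yD x]])
    also have "\<dots> \<le> C * (real (card F) * d)" using s C by (rule mult_left_mono)
    also have "\<dots> < \<epsilon>"
    proof -
      have "C * (real (card F) * d) = (C * real (card F)) * d" by simp
      also have "\<dots> < (C * real (card F) + 1) * d" using dpos by simp
      also have "\<dots> = \<epsilon>"
      proof -
        have "C * real (card F) + 1 > 0" using C by (simp add: add_nonneg_pos)
        then show ?thesis unfolding d_def by simp
      qed
      finally show ?thesis .
    qed
    finally show "dist (q y) (q x) < \<epsilon>" by (simp add: dist_real_def)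
  qed
  then show "\<exists>F e. finite F \<and> F \<subseteq> P \<and> e > 0 \<and> (\<forall>y\<in>sball D F x e. dist (q y) (q x) < \<epsilon>)"
    using F dpos by blast
qed

lemma bounded_dom:
  assumes B: "B \<subseteq> D" "sn_bounded P B" and F: "finite F" "F \<subseteq> P" and C: "C \<ge> 0"
    and dom: "\<And>y. y \<in> D \<Longrightarrow> q y \<le> C * (\<Sum>p\<in>F. p y)"
  shows "\<exists>K. \<forall>y\<in>B. q y \<le> K"
proof -
  have "\<forall>y\<in>B. q y \<le> C * (\<Sum>p\<in>F. Sup (p ` B))"
  proof
    fix y assume y: "y \<in> B"
    have "(\<Sum>p\<in>F. p y) \<le> (\<Sum>p\<in>F. Sup (p ` B))"
    proof (rule sum_mono)
      fix p assume "p \<in> F"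
      then have "bdd_above (p ` B)" using B(2) F(2) unfolding sn_bounded_def by auto
      then show "p y \<le> Sup (p ` B)" using y by (rule cSUP_upper2) simp
    qed
    then show "q y \<le> C * (\<Sum>p\<in>F. Sup (p ` B))"
      using dom[of y] y B(1) C by (meson in_mono mult_left_mono order_trans)
  qed
  then show ?thesis by blast
qed

end

context rctx
begin

abbreviation "tD \<equiv> sn_topology D P"
abbreviation "Dx \<equiv> conj_dual sc D P"

lemma cd_add: "\<Phi> \<in> Dx \<Longrightarrow> x \<in> D \<Longrightarrow> y \<in> D \<Longrightarrow> \<Phi> (x + y) = \<Phi> x + \<Phi> y"
  unfolding conj_dual_def by simp
lemma cd_sc: "\<Phi> \<in> Dx \<Longrightarrow> x \<in> D \<Longrightarrow> \<Phi> (sc c x) = cnj c * \<Phi> x"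
  unfolding conj_dual_def by simp
lemma cd_out: "\<Phi> \<in> Dx \<Longrightarrow> x \<notin> D \<Longrightarrow> \<Phi> x = 0"
  unfolding conj_dual_def by simp
lemma cd_cont: "\<Phi> \<in> Dx \<Longrightarrow> continuous_map tD euclidean \<Phi>"
  unfolding conj_dual_def by simp
lemma cd_zero: "\<Phi> \<in> Dx \<Longrightarrow> \<Phi> 0 = 0"
  using cd_sc[of \<Phi> 0 0] by simp
lemma cd_minus: "\<Phi> \<in> Dx \<Longrightarrow> x \<in> D \<Longrightarrow> \<Phi> (- x) = - \<Phi> x"
  using cd_sc[of \<Phi> x "-1"] by (simp add: sc_minus_one)
lemma cd_diff: "\<Phi> \<in> Dx \<Longrightarrow> x \<in> D \<Longrightarrow> y \<in> D \<Longrightarrow> \<Phi> (x - y) = \<Phi> x - \<Phi> y"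
  using cd_add[of \<Phi> x "- y"] cd_minus[of \<Phi> y] Dminus by simp
lemma cd_sum: "\<Phi> \<in> Dx \<Longrightarrow> (\<And>i. i \<in> A \<Longrightarrow> x i \<in> D) \<Longrightarrow>
    \<Phi> (\<Sum>i\<in>A. sc (c i) (x i)) = (\<Sum>i\<in>A. cnj (c i) * \<Phi> (x i))"
proof (induction A rule: infinite_finite_induct)
  case (infinite A) then show ?case using cd_zero by simp
next
  case empty then show ?case using cd_zero by simp
next
  case (insert a A)
  have "\<Phi> (\<Sum>i\<in>insert a A. sc (c i) (x i)) = \<Phi> (sc (c a) (x a) + (\<Sum>i\<in>A. sc (c i) (x i)))"
    using insert.hyps by simp
  also have "\<dots> = \<Phi> (sc (c a) (x a)) + \<Phi> (\<Sum>i\<in>A. sc (c i) (x i))"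
    using insert.prems by (intro cd_add) (auto intro!: Dsc Dsum)
  also have "\<dots> = cnj (c a) * \<Phi> (x a) + (\<Sum>i\<in>A. cnj (c i) * \<Phi> (x i))"
    using insert by (simp add: cd_sc)
  finally show ?case using insert.hyps by simp
qed

lemma lim_unique:
  assumes "limitin tD s a sequentially" "limitin tD s b sequentially"
  shows "a = b"
proof -
  have "hnorm ip (a - b) < e" if e: "e > 0" for e
  proof -
    have "eventually (\<lambda>n. hnorm ip (s n - a) < e/2) sequentially"
         "eventually (\<lambda>n. hnorm ip (s n - b) < e/2) sequentially"
      using lim_to_H[OF assms(1), of "e/2"] lim_to_H[OF assms(2), of "e/2"] e by simp_all
    then obtain n where "hnorm ip (s n - a) < e/2" "hnorm ip (s n - b) < e/2"
      using eventually_conj eventually_sequentially by (metis (no_types, lifting) order_refl)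
    moreover have "hnorm ip (a - b) \<le> hnorm ip (a - s n) + hnorm ip (s n - b)"
      by (rule hnorm_triangle_diff)
    ultimately show ?thesis using hnorm_commute[of a "s n"] by simp
  qed
  then have "hnorm ip (a - b) = 0" using hnorm_nonneg
    by (metis less_eq_real_def not_less)
  then show ?thesis using hnorm_eq_zero by simp
qed

end

locale bctx = rctx +
  fixes \<xi> :: "nat \<Rightarrow> 'a"
  assumes basis: "topological_basis_sn sc D P \<xi>"
begin

lemma xiD: "\<xi> n \<in> D" using basis unfolding topological_basis_sn_def by simp

lemma expand_ex1: "f \<in> D \<Longrightarrow> \<exists>!c. limitin tD (\<lambda>N. \<Sum>n<N. sc (c n) (\<xi> n)) f sequentially"
  using basis unfolding topological_basis_sn_def by simp

lemma bcoeff_lim: "f \<in> D \<Longrightarrow>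
    limitin tD (\<lambda>N. \<Sum>n<N. sc (basis_coeff sc D P \<xi> n f) (\<xi> n)) f sequentially"
  unfolding basis_coeff_def using theI'[OF expand_ex1] by simp

lemma bcoeff_unique: "f \<in> D \<Longrightarrow> limitin tD (\<lambda>N. \<Sum>n<N. sc (c n) (\<xi> n)) f sequentially \<Longrightarrow>
    c n = basis_coeff sc D P \<xi> n f"
  using expand_ex1[of f] bcoeff_lim[of f] by metis

lemma coef_lemma:
  assumes z: "\<zeta> n \<in> Dx" and bi: "\<And>k. \<zeta> n (\<xi> k) = (if n = k then 1 else 0)"
    and lim: "limitin tD (\<lambda>N. \<Sum>k<N. sc (c k) (\<xi> k)) f sequentially"
  shows "c n = cnj (\<zeta> n f)"
proof -
  have L: "limitin euclidean (\<zeta> n \<circ> (\<lambda>N. \<Sum>k<N. sc (c k) (\<xi> k))) (\<zeta> n f) sequentially"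
    by (rule continuous_map_limit[OF cd_cont[OF z] lim])
  have ev: "eventually (\<lambda>N. (\<zeta> n \<circ> (\<lambda>N. \<Sum>k<N. sc (c k) (\<xi> k))) N = cnj (c n)) sequentially"
  proof (rule eventually_sequentiallyI[of "Suc n"])
    fix N assume N: "Suc n \<le> N"
    have "(\<zeta> n \<circ> (\<lambda>N. \<Sum>k<N. sc (c k) (\<xi> k))) N = (\<Sum>k<N. cnj (c k) * \<zeta> n (\<xi> k))"
      using cd_sum[OF z, of "{..<N}" \<xi> c] xiD by simp
    also have "\<dots> = (\<Sum>k<N. if k = n then cnj (c n) else 0)"
      by (intro sum.cong) (auto simp: bi)
    also have "\<dots> = cnj (c n)" using N by (simp add: sum.delta')
    finally show "(\<zeta> n \<circ> (\<lambda>N. \<Sum>k<N. sc (c k) (\<xi> k))) N = cnj (c n)" .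
  qed
  have L2: "limitin euclidean (\<zeta> n \<circ> (\<lambda>N. \<Sum>k<N. sc (c k) (\<xi> k))) (cnj (c n)) sequentially"
    by (rule limitin_eventually[OF _ ev]) simp
  have "cnj (c n) = \<zeta> n f" using L L2 by (simp add: LIMSEQ_unique)
  then show ?thesis by (metis complex_cnj_cnj)
qed

definition spanX :: "nat \<Rightarrow> 'a set" where
  "spanX m = {(\<Sum>j<m. sc (c j) (\<xi> j)) | c. True}"

lemma lin_indep: "\<xi> n \<notin> spanX n"
proof
  assume "\<xi> n \<in> spanX n"
  then obtain c where c: "\<xi> n = (\<Sum>j<n. sc (c j) (\<xi> j))" unfolding spanX_def by blast
  define a where "a = (\<lambda>j. if j < n then c j else 0)"
  define b :: "nat \<Rightarrow> complex" where "b = (\<lambda>j. if j = n then 1 else 0)"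
  have ea: "eventually (\<lambda>N. (\<Sum>k<N. sc (a k) (\<xi> k)) = \<xi> n) sequentially"
  proof (rule eventually_sequentiallyI[of n])
    fix N assume N: "n \<le> N"
    have "(\<Sum>k<N. sc (a k) (\<xi> k)) = (\<Sum>k<n. sc (a k) (\<xi> k))"
      by (rule sum.mono_neutral_right) (use N in \<open>auto simp: a_def\<close>)
    also have "\<dots> = (\<Sum>k<n. sc (c k) (\<xi> k))" by (intro sum.cong) (auto simp: a_def)
    finally show "(\<Sum>k<N. sc (a k) (\<xi> k)) = \<xi> n" using c by simp
  qed
  have eb: "eventually (\<lambda>N. (\<Sum>k<N. sc (b k) (\<xi> k)) = \<xi> n) sequentially"
  proof (rule eventually_sequentiallyI[of "Suc n"])
    fix N assume N: "Suc n \<le> N"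
    have "(\<Sum>k<N. sc (b k) (\<xi> k)) = (\<Sum>k<N. if k = n then \<xi> n else 0)"
      by (intro sum.cong) (auto simp: b_def)
    also have "\<dots> = \<xi> n" using N by (simp add: sum.delta')
    finally show "(\<Sum>k<N. sc (b k) (\<xi> k)) = \<xi> n" .
  qed
  have la: "limitin tD (\<lambda>N. \<Sum>k<N. sc (a k) (\<xi> k)) (\<xi> n) sequentially"
    by (rule limitin_eventually[OF _ ea]) (simp add: xiD)
  have lb: "limitin tD (\<lambda>N. \<Sum>k<N. sc (b k) (\<xi> k)) (\<xi> n) sequentially"
    by (rule limitin_eventually[OF _ eb]) (simp add: xiD)
  have "a = b" using expand_ex1[OF xiD[of n]] la lb by blast
  then have "a n = b n" by simp
  then show False unfolding a_def b_def by simp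
qed

end

lemma l2_sum_le_suminf:
  fixes a :: "nat \<Rightarrow> real"
  shows "summable a \<Longrightarrow> (\<And>n. a n \<ge> 0) \<Longrightarrow> (\<Sum>n<N. a n) \<le> (\<Sum>n. a n)"
  by (rule sum_le_suminf) auto

lemma l2_minkowski:
  fixes a b :: "nat \<Rightarrow> complex"
  assumes sa: "summable (\<lambda>n. (cmod (a n))\<^sup>2)" and sb: "summable (\<lambda>n. (cmod (b n))\<^sup>2)"
  shows "summable (\<lambda>n. (cmod (a n + b n))\<^sup>2)"
    and "sqrt (\<Sum>n. (cmod (a n + b n))\<^sup>2) \<le> sqrt (\<Sum>n. (cmod (a n))\<^sup>2) + sqrt (\<Sum>n. (cmod (b n))\<^sup>2)"
proof -
  define M where "M = sqrt (\<Sum>n. (cmod (a n))\<^sup>2) + sqrt (\<Sum>n. (cmod (b n))\<^sup>2)"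
  have part: "(\<Sum>n<N. (cmod (a n + b n))\<^sup>2) \<le> M\<^sup>2" for N
  proof -
    have "L2_set (\<lambda>n. cmod (a n + b n)) {..<N} \<le> L2_set (\<lambda>n. cmod (a n) + cmod (b n)) {..<N}"
      by (rule L2_set_mono) (auto simp: norm_triangle_ineq)
    also have "\<dots> \<le> L2_set (\<lambda>n. cmod (a n)) {..<N} + L2_set (\<lambda>n. cmod (b n)) {..<N}"
      by (rule L2_set_triangle_ineq)
    also have "L2_set (\<lambda>n. cmod (a n)) {..<N} \<le> sqrt (\<Sum>n. (cmod (a n))\<^sup>2)"
      unfolding L2_set_def by (rule real_sqrt_le_mono, rule l2_sum_le_suminf[OF sa]) simp
    also have "L2_set (\<lambda>n. cmod (b n)) {..<N} \<le> sqrt (\<Sum>n. (cmod (b n))\<^sup>2)"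
      unfolding L2_set_def by (rule real_sqrt_le_mono, rule l2_sum_le_suminf[OF sb]) simp
    finally have "L2_set (\<lambda>n. cmod (a n + b n)) {..<N} \<le> M" unfolding M_def by simp
    then have "(L2_set (\<lambda>n. cmod (a n + b n)) {..<N})\<^sup>2 \<le> M\<^sup>2"
      by (rule power_mono) simp
    then show ?thesis unfolding L2_set_def by (simp add: sum_nonneg)
  qed
  show s: "summable (\<lambda>n. (cmod (a n + b n))\<^sup>2)"
    by (rule summableI_nonneg_bounded[OF _ part]) simp
  have "(\<Sum>n. (cmod (a n + b n))\<^sup>2) \<le> M\<^sup>2" by (rule suminf_le_const[OF s part])
  then have "sqrt (\<Sum>n. (cmod (a n + b n))\<^sup>2) \<le> sqrt (M\<^sup>2)" by (rule real_sqrt_le_mono)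
  also have "\<dots> = M" unfolding M_def using suminf_nonneg[OF sa] suminf_nonneg[OF sb] by simp
  finally show "sqrt (\<Sum>n. (cmod (a n + b n))\<^sup>2) \<le> sqrt (\<Sum>n. (cmod (a n))\<^sup>2) + sqrt (\<Sum>n. (cmod (b n))\<^sup>2)"
    unfolding M_def .
qed

lemma cnj_mult_self: "cnj z * z = complex_of_real ((cmod z)\<^sup>2)"
  by (metis complex_norm_square mult.commute)

context hil
begin

definition orthon :: "(nat \<Rightarrow> 'h) \<Rightarrow> bool" where
  "orthon e \<longleftrightarrow> (\<forall>n m. ip (e n) (e m) = (if n = m then 1 else 0))"

lemma ip_sum_e:
  assumes "orthon e" "finite A"
  shows "ip (\<Sum>i\<in>A. sc (c i) (e i)) (e j) = (if j \<in> A then c j else 0)"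
proof -
  have "ip (\<Sum>i\<in>A. sc (c i) (e i)) (e j) = (\<Sum>i\<in>A. c i * ip (e i) (e j))"
    by (simp add: ip_sum_left ip_sc_left)
  also have "\<dots> = (\<Sum>i\<in>A. if i = j then c j else 0)"
    using assms(1) unfolding orthon_def by (intro sum.cong) auto
  also have "\<dots> = (if j \<in> A then c j else 0)" using assms(2) by (simp add: sum.delta')
  finally show ?thesis .
qed

lemma pyth:
  assumes "orthon e" "finite A"
  shows "(hnorm ip (\<Sum>i\<in>A. sc (c i) (e i)))\<^sup>2 = (\<Sum>i\<in>A. (cmod (c i))\<^sup>2)"
proof -
  have "ip (\<Sum>i\<in>A. sc (c i) (e i)) (\<Sum>j\<in>A. sc (c j) (e j))
      = (\<Sum>j\<in>A. cnj (c j) * ip (\<Sum>i\<in>A. sc (c i) (e i)) (e j))"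
    by (simp add: ip_sum_right ip_sc_right)
  also have "\<dots> = (\<Sum>j\<in>A. cnj (c j) * c j)"
    using assms by (intro sum.cong) (auto simp: ip_sum_e)
  also have "\<dots> = (\<Sum>j\<in>A. complex_of_real ((cmod (c j))\<^sup>2))"
    by (intro sum.cong refl) (rule cnj_mult_self)
  also have "\<dots> = complex_of_real (\<Sum>j\<in>A. (cmod (c j))\<^sup>2)" by (rule of_real_sum[symmetric])
  finally have "complex_of_real ((hnorm ip (\<Sum>i\<in>A. sc (c i) (e i)))\<^sup>2) = complex_of_real (\<Sum>j\<in>A. (cmod (c j))\<^sup>2)"
    unfolding ip_self_hnorm .
  then show ?thesis using of_real_eq_iff by blast
qed

lemma bessel:
  assumes "orthon e" "finite A"
  shows "(\<Sum>n\<in>A. (cmod (ip x (e n)))\<^sup>2) \<le> (hnorm ip x)\<^sup>2"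
proof -
  define c where "c n = ip x (e n)" for n
  define y where "y = (\<Sum>i\<in>A. sc (c i) (e i))"
  have "ip y y = (\<Sum>j\<in>A. cnj (c j) * c j)"
    unfolding y_def using assms by (simp add: ip_sum_right ip_sc_right ip_sum_e)
  have xy: "ip x y = (\<Sum>j\<in>A. cnj (c j) * c j)"
    unfolding y_def c_def by (simp add: ip_sum_right ip_sc_right)
  have yx: "ip y x = (\<Sum>j\<in>A. c j * cnj (c j))"
    unfolding y_def c_def by (simp add: ip_sum_left ip_sc_left ip_sym[of x])
  have yy: "ip y y = (\<Sum>j\<in>A. cnj (c j) * c j)"
    unfolding y_def using assms by (simp add: ip_sum_right ip_sc_right ip_sum_e)
  have s: "(\<Sum>j\<in>A. cnj (c j) * c j) = complex_of_real (\<Sum>j\<in>A. (cmod (c j))\<^sup>2)"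
    unfolding of_real_sum by (intro sum.cong refl) (rule cnj_mult_self)
  have "0 \<le> Re (ip (x - y) (x - y))" by (rule ip_self_Re)
  also have "ip (x - y) (x - y) = ip x x - ip x y - ip y x + ip y y"
    by (simp add: ip_diff_left ip_diff_right)
  also have "\<dots> = ip x x - complex_of_real (\<Sum>j\<in>A. (cmod (c j))\<^sup>2)"
    using xy yx yy s by (simp add: mult.commute)
  finally show ?thesis unfolding c_def by (simp add: hnorm_sq)
qed

definition hlim :: "(nat \<Rightarrow> 'h) \<Rightarrow> 'h \<Rightarrow> bool" where
  "hlim s a \<longleftrightarrow> (\<forall>e>0. eventually (\<lambda>n. hnorm ip (s n - a) < e) sequentially)"

lemma hlim_unique: "hlim s a \<Longrightarrow> hlim s b \<Longrightarrow> a = b"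
proof -
  assume A: "hlim s a" "hlim s b"
  have "hnorm ip (a - b) < e" if e: "e > 0" for e
  proof -
    have "eventually (\<lambda>n. hnorm ip (s n - a) < e/2) sequentially"
         "eventually (\<lambda>n. hnorm ip (s n - b) < e/2) sequentially"
      using A half_gt_zero[OF e] unfolding hlim_def by meson+
    then obtain n where "hnorm ip (s n - a) < e/2" "hnorm ip (s n - b) < e/2"
      using eventually_conj eventually_sequentially by (metis (no_types, lifting) order_refl)
    moreover have "hnorm ip (a - b) \<le> hnorm ip (a - s n) + hnorm ip (s n - b)"
      by (rule hnorm_triangle_diff)
    ultimately show ?thesis using hnorm_commute[of a "s n"] by simp
  qed
  then have "hnorm ip (a - b) = 0" using hnorm_nonneg
    by (metis less_eq_real_def not_less)
  then show ?thesis using hnorm_eq_zero by simp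
qed

lemma hlim_add: "hlim s a \<Longrightarrow> hlim t b \<Longrightarrow> hlim (\<lambda>n. s n + t n) (a + b)"
  unfolding hlim_def
proof (intro allI impI)
  fix e :: real assume A: "\<forall>e>0. eventually (\<lambda>n. hnorm ip (s n - a) < e) sequentially"
    "\<forall>e>0. eventually (\<lambda>n. hnorm ip (t n - b) < e) sequentially" and e: "e > 0"
  have "eventually (\<lambda>n. hnorm ip (s n - a) < e/2 \<and> hnorm ip (t n - b) < e/2) sequentially"
  proof (rule eventually_conj)
    show "eventually (\<lambda>n. hnorm ip (s n - a) < e/2) sequentially" using A(1) half_gt_zero[OF e] by blast
    show "eventually (\<lambda>n. hnorm ip (t n - b) < e/2) sequentially" using A(2) half_gt_zero[OF e] by blast
  qed
  then show "eventually (\<lambda>n. hnorm ip (s n + t n - (a + b)) < e) sequentially"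
  proof (rule eventually_mono)
    fix n assume "hnorm ip (s n - a) < e/2 \<and> hnorm ip (t n - b) < e/2"
    moreover have "hnorm ip (s n + t n - (a + b)) \<le> hnorm ip (s n - a) + hnorm ip (t n - b)"
      using hnorm_triangle[of "s n - a" "t n - b"] by (simp add: algebra_simps)
    ultimately show "hnorm ip (s n + t n - (a + b)) < e" by simp
  qed
qed

lemma hlim_sc: "hlim s a \<Longrightarrow> hlim (\<lambda>n. sc c (s n)) (sc c a)"
  unfolding hlim_def
proof (intro allI impI)
  fix e :: real assume A: "\<forall>e>0. eventually (\<lambda>n. hnorm ip (s n - a) < e) sequentially" and e: "e > 0"
  have "eventually (\<lambda>n. hnorm ip (s n - a) < e / (cmod c + 1)) sequentially"
  proof -
    have "e / (cmod c + 1) > 0" using e by (simp add: add_nonneg_pos)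
    then show ?thesis using A by meson
  qed
  then show "eventually (\<lambda>n. hnorm ip (sc c (s n) - sc c a) < e) sequentially"
  proof (rule eventually_mono)
    fix n assume h: "hnorm ip (s n - a) < e / (cmod c + 1)"
    have "hnorm ip (sc c (s n) - sc c a) = cmod c * hnorm ip (s n - a)"
      by (simp add: sc_diff_right[symmetric] hnorm_sc)
    also have "\<dots> \<le> (cmod c + 1) * hnorm ip (s n - a)"
      using hnorm_nonneg by (simp add: mult_right_mono)
    also have "\<dots> < (cmod c + 1) * (e / (cmod c + 1))"
      using h by (intro mult_strict_left_mono) (auto simp: add_nonneg_pos)
    also have "\<dots> = e" using norm_ge_zero[of c] by (simp add: add_nonneg_pos del: norm_ge_zero)
    finally show "hnorm ip (sc c (s n) - sc c a) < e" .
  qed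
qed

lemma hlim_norm: "hlim s a \<Longrightarrow> (\<lambda>n. hnorm ip (s n)) \<longlonglongrightarrow> hnorm ip a"
proof (rule LIMSEQ_I)
  fix r :: real assume "hlim s a" "r > 0"
  then have "eventually (\<lambda>n. hnorm ip (s n - a) < r) sequentially" unfolding hlim_def by simp
  then obtain N where "\<forall>n\<ge>N. hnorm ip (s n - a) < r" unfolding eventually_sequentially by blast
  then have "\<forall>n\<ge>N. norm (hnorm ip (s n) - hnorm ip a) < r"
    using hnorm_rev_triangle[of "s _" a] by (auto intro: le_less_trans)
  then show "\<exists>no. \<forall>n\<ge>no. norm (hnorm ip (s n) - hnorm ip a) < r" by blast
qed

lemma hcomplete:
  assumes C: "\<And>e. e > 0 \<Longrightarrow> \<exists>N. \<forall>m\<ge>N. \<forall>n\<ge>N. hnorm ip (s m - s n) < e"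
  shows "\<exists>a. hlim s a"
proof -
  define F where "F = filtermap s sequentially"
  have "F \<noteq> bot" unfolding F_def by (simp add: filtermap_bot_iff)
  moreover have "F \<le> principal UNIV" by simp
  moreover have "sn_cauchy {hnorm ip} F"
    unfolding sn_cauchy_def
  proof (intro ballI allI impI)
    fix p and e :: real assume p: "p \<in> {hnorm ip}" and e: "e > 0"
    obtain N where N: "\<forall>m\<ge>N. \<forall>n\<ge>N. hnorm ip (s m - s n) < e" using C[OF e] by blast
    have ev: "eventually (\<lambda>x. x \<in> s ` {N..}) F"
      unfolding F_def eventually_filtermap eventually_sequentially by auto
    show "eventually (\<lambda>(x, y). p (x - y) < e) (F \<times>\<^sub>F F)"
      unfolding eventually_prod_same
      by (rule exI[of _ "\<lambda>x. x \<in> s ` {N..}"]) (use ev N p in auto)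
  qed
  ultimately obtain a where "sn_converges {hnorm ip} F a"
    using complete_H unfolding sn_complete_set_def by blast
  then have "hlim s a"
    unfolding sn_converges_def hlim_def F_def eventually_filtermap by simp
  then show ?thesis by blast
qed

end

context rctx
begin

lemma cont_crit_D:
  fixes f :: "'h \<Rightarrow> 'b::metric_space"
  assumes "continuous_map tD euclidean f" "x \<in> D" "\<epsilon> > 0"
  shows "\<exists>F e. finite F \<and> F \<subseteq> P \<and> e > 0 \<and> (\<forall>y\<in>sball D F x e. dist (f y) (f x) < \<epsilon>)"
  by (rule sn_cont_metricD[OF okD assms])

lemma cont_crit_D_I:
  fixes f :: "'h \<Rightarrow> 'b::metric_space"
  assumes "\<And>x \<epsilon>. x \<in> D \<Longrightarrow> \<epsilon> > 0 \<Longrightarrow> \<exists>F e. finite F \<and> F \<subseteq> P \<and> e > 0 \<and> (\<forall>y\<in>sball D F x e. dist (f y) (f x) < \<epsilon>)"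
  shows "continuous_map tD euclidean f"
  by (rule sn_cont_metricI[OF okD assms])

lemma contH_crit:
  assumes c: "continuous_map tD (htop ip) T" and x: "x \<in> D" and eps: "\<epsilon> > 0"
  shows "\<exists>F e. finite F \<and> F \<subseteq> P \<and> e > 0 \<and> (\<forall>y\<in>sball D F x e. hnorm ip (T y - T x) < \<epsilon>)"
proof -
  have "openin tD {y \<in> topspace tD. T y \<in> {z. hnorm ip (z - T x) < \<epsilon>}}"
    using c hball_open unfolding continuous_map_def by blast
  then have o: "openin tD {y \<in> D. hnorm ip (T y - T x) < \<epsilon>}" by simp
  have "x \<in> {y \<in> D. hnorm ip (T y - T x) < \<epsilon>}" using x eps by simp
  then obtain F e where "finite F" "F \<subseteq> P" "e > 0" "sball D F x e \<subseteq> {y \<in> D. hnorm ip (T y - T x) < \<epsilon>}"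
    using sn_openD[OF okD o] by meson
  then show ?thesis by auto
qed

lemma dist_cnj: "dist (cnj a) (cnj b) = dist a b"
  by (metis complex_cnj_diff complex_mod_cnj dist_norm)

lemma cnj_cont:
  assumes c: "continuous_map tD euclidean \<Phi>"
  shows "continuous_map tD euclidean (\<lambda>x. cnj (\<Phi> x))"
proof (rule cont_crit_D_I)
  fix x and \<epsilon> :: real assume x: "x \<in> D" and eps: "\<epsilon> > 0"
  obtain F e where "finite F" "F \<subseteq> P" "e > 0" "\<forall>y\<in>sball D F x e. dist (\<Phi> y) (\<Phi> x) < \<epsilon>"
    using cont_crit_D[OF c x eps] by blast
  then show "\<exists>F e. finite F \<and> F \<subseteq> P \<and> e > 0 \<and> (\<forall>y\<in>sball D F x e. dist (cnj (\<Phi> y)) (cnj (\<Phi> x)) < \<epsilon>)"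
    using dist_cnj by auto
qed

end

context bctx
begin

lemma zeta_unique:
  assumes "\<forall>n. \<zeta> n \<in> Dx" "\<forall>n k. \<zeta> n (\<xi> k) = (if n = k then 1 else 0)"
    "\<forall>n. \<zeta>' n \<in> Dx" "\<forall>n k. \<zeta>' n (\<xi> k) = (if n = k then 1 else 0)"
  shows "\<zeta> = \<zeta>'"
proof (intro ext)
  fix n f
  show "\<zeta> n f = \<zeta>' n f"
  proof (cases "f \<in> D")
    case True
    have "basis_coeff sc D P \<xi> n f = cnj (\<zeta> n f)"
      by (rule coef_lemma[OF _ _ bcoeff_lim[OF True]]) (use assms in auto)
    moreover have "basis_coeff sc D P \<xi> n f = cnj (\<zeta>' n f)"
      by (rule coef_lemma[OF _ _ bcoeff_lim[OF True]]) (use assms in auto)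
    ultimately show ?thesis by (metis complex_cnj_cnj)
  next
    case False
    then show ?thesis using assms cd_out by metis
  qed
qed

lemma schauder_of_zeta:
  assumes "\<forall>n. \<zeta> n \<in> Dx" "\<forall>n k. \<zeta> n (\<xi> k) = (if n = k then 1 else 0)"
  shows "schauder_basis_sn sc D P \<xi>"
  unfolding schauder_basis_sn_def
proof (intro conjI allI basis)
  fix n
  have "continuous_map tD euclidean (\<lambda>f. cnj (\<zeta> n f))"
    using assms(1) by (intro cnj_cont cd_cont) simp
  moreover have "\<And>f. f \<in> topspace tD \<Longrightarrow> cnj (\<zeta> n f) = basis_coeff sc D P \<xi> n f"
  proof -
    fix f assume "f \<in> topspace tD"
    then have f: "f \<in> D" by simp
    show "cnj (\<zeta> n f) = basis_coeff sc D P \<xi> n f"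
      by (rule coef_lemma[OF _ _ bcoeff_lim[OF f], symmetric]) (use assms in auto)
  qed
  ultimately show "continuous_map tD euclidean (basis_coeff sc D P \<xi> n)"
    by (rule continuous_map_eq)
qed

lemma hnorm_unit: "ip x x = 1 \<Longrightarrow> hnorm ip x = 1"
  unfolding hnorm_def by simp

lemma i_to_ii:
  assumes TC: "in_C_DH sc ip D P T" and onb: "orthonormal_basis sc ip (\<lambda>n. T (\<xi> n))"
  defines "\<zeta> \<equiv> (\<lambda>n f. if f \<in> D then ip (T (\<xi> n)) (T f) else 0)"
  shows "(\<forall>n. \<zeta> n \<in> Dx) \<and> (\<forall>n k. \<zeta> n (\<xi> k) = (if n = k then 1 else 0))
         \<and> (\<forall>f\<in>D. summable (\<lambda>n. (cmod (\<zeta> n f))\<^sup>2))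
         \<and> continuous_map tD euclidean (\<lambda>f. sqrt (\<Sum>n. (cmod (\<zeta> n f))\<^sup>2))"
proof -
  define e where "e n = T (\<xi> n)" for n
  have on: "orthon e" using onb unfolding orthonormal_basis_def orthon_def e_def by blast
  have Tadd: "\<And>x y. x \<in> D \<Longrightarrow> y \<in> D \<Longrightarrow> T (x + y) = T x + T y" using TC unfolding in_C_DH_def by blast
  have Tsc: "\<And>c x. x \<in> D \<Longrightarrow> T (sc c x) = sc c (T x)" using TC unfolding in_C_DH_def by blast
  have Tc: "continuous_map tD (htop ip) T" using TC unfolding in_C_DH_def by blast
  have en: "hnorm ip (e n) = 1" for n using on unfolding orthon_def by (simp add: hnorm_unit)
  have zD: "\<zeta> n f = ip (e n) (T f)" if "f \<in> D" for n f using that unfolding \<zeta>_def e_def by simp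
  have zdiff: "cmod (\<zeta> n g - \<zeta> n f) \<le> hnorm ip (T g - T f)" if "f \<in> D" "g \<in> D" for n f g
  proof -
    have "\<zeta> n g - \<zeta> n f = ip (e n) (T g - T f)" using that by (simp add: zD ip_diff_right)
    also have "cmod \<dots> \<le> hnorm ip (e n) * hnorm ip (T g - T f)" by (rule cauchy_schwarz)
    finally show ?thesis using en by simp
  qed
  have A: "\<forall>n. \<zeta> n \<in> Dx"
  proof
    fix n
    show "\<zeta> n \<in> Dx"
      unfolding conj_dual_def
    proof (intro CollectI conjI ballI allI impI)
      fix x y assume "x \<in> D" "y \<in> D"
      then show "\<zeta> n (x + y) = \<zeta> n x + \<zeta> n y" using Dadd by (simp add: zD Tadd ip_add_right)
    next
      fix c x assume "x \<in> D"
      then show "\<zeta> n (sc c x) = cnj c * \<zeta> n x" using Dsc by (simp add: zD Tsc ip_sc_right)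
    next
      fix x assume "x \<notin> D" then show "\<zeta> n x = 0" unfolding \<zeta>_def by simp
    next
      show "continuous_map tD euclidean (\<zeta> n)"
      proof (rule cont_crit_D_I)
        fix x and \<epsilon> :: real assume x: "x \<in> D" and eps: "\<epsilon> > 0"
        obtain F d where F: "finite F" "F \<subseteq> P" "d > 0" "\<forall>y\<in>sball D F x d. hnorm ip (T y - T x) < \<epsilon>"
          using contH_crit[OF Tc x eps] by meson
        have "\<forall>y\<in>sball D F x d. dist (\<zeta> n y) (\<zeta> n x) < \<epsilon>"
        proof
          fix y assume y: "y \<in> sball D F x d"
          then have "y \<in> D" using sball_sub by blast
          then show "dist (\<zeta> n y) (\<zeta> n x) < \<epsilon>"
            using zdiff[OF x \<open>y \<in> D\<close>, of n] F(4) y unfolding dist_norm by fastforce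
        qed
        then show "\<exists>F e. finite F \<and> F \<subseteq> P \<and> e > 0 \<and> (\<forall>y\<in>sball D F x e. dist (\<zeta> n y) (\<zeta> n x) < \<epsilon>)"
          using F by blast
      qed
    qed
  qed
  have B: "\<forall>n k. \<zeta> n (\<xi> k) = (if n = k then 1 else 0)"
    using on xiD unfolding orthon_def by (simp add: zD e_def[symmetric])
  have bes: "(\<Sum>n<N. (cmod (ip (e n) x))\<^sup>2) \<le> (hnorm ip x)\<^sup>2" for N x
  proof -
    have "(\<Sum>n<N. (cmod (ip (e n) x))\<^sup>2) = (\<Sum>n<N. (cmod (ip x (e n)))\<^sup>2)"
      by (intro sum.cong refl) (metis complex_mod_cnj ip_sym)
    also have "\<dots> \<le> (hnorm ip x)\<^sup>2" by (rule bessel[OF on]) simp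
    finally show ?thesis .
  qed
  have sumip: "summable (\<lambda>n. (cmod (ip (e n) x))\<^sup>2)" for x
    by (rule summableI_nonneg_bounded[OF _ bes]) simp
  have sqip: "sqrt (\<Sum>n. (cmod (ip (e n) x))\<^sup>2) \<le> hnorm ip x" for x
  proof -
    have "(\<Sum>n. (cmod (ip (e n) x))\<^sup>2) \<le> (hnorm ip x)\<^sup>2" by (rule suminf_le_const[OF sumip bes])
    then have "sqrt (\<Sum>n. (cmod (ip (e n) x))\<^sup>2) \<le> sqrt ((hnorm ip x)\<^sup>2)" by (rule real_sqrt_le_mono)
    then show ?thesis using hnorm_nonneg by simp
  qed
  have C: "\<forall>f\<in>D. summable (\<lambda>n. (cmod (\<zeta> n f))\<^sup>2)"
    using sumip by (simp add: zD)
  have tri: "sqrt (\<Sum>n. (cmod (\<zeta> n g))\<^sup>2) \<le> sqrt (\<Sum>n. (cmod (\<zeta> n f))\<^sup>2) + hnorm ip (T g - T f)"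
    if f: "f \<in> D" and g: "g \<in> D" for f g
  proof -
    have eq: "\<zeta> n g = \<zeta> n f + ip (e n) (T g - T f)" for n using f g by (simp add: zD ip_diff_right)
    have "sqrt (\<Sum>n. (cmod (\<zeta> n f + ip (e n) (T g - T f)))\<^sup>2)
        \<le> sqrt (\<Sum>n. (cmod (\<zeta> n f))\<^sup>2) + sqrt (\<Sum>n. (cmod (ip (e n) (T g - T f)))\<^sup>2)"
      by (rule l2_minkowski(2)) (use C f sumip in auto)
    also have "\<dots> \<le> sqrt (\<Sum>n. (cmod (\<zeta> n f))\<^sup>2) + hnorm ip (T g - T f)"
      using sqip by simp
    finally show ?thesis using eq by simp
  qed
  have Dc: "continuous_map tD euclidean (\<lambda>f. sqrt (\<Sum>n. (cmod (\<zeta> n f))\<^sup>2))"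
  proof (rule cont_crit_D_I)
    fix x and \<epsilon> :: real assume x: "x \<in> D" and eps: "\<epsilon> > 0"
    obtain F d where F: "finite F" "F \<subseteq> P" "d > 0" "\<forall>y\<in>sball D F x d. hnorm ip (T y - T x) < \<epsilon>"
      using contH_crit[OF Tc x eps] by meson
    have "\<forall>y\<in>sball D F x d. dist (sqrt (\<Sum>n. (cmod (\<zeta> n y))\<^sup>2)) (sqrt (\<Sum>n. (cmod (\<zeta> n x))\<^sup>2)) < \<epsilon>"
    proof
      fix y assume y: "y \<in> sball D F x d"
      then have yD: "y \<in> D" using sball_sub by blast
      have "hnorm ip (T x - T y) < \<epsilon>" using F(4) y hnorm_commute by metis
      then show "dist (sqrt (\<Sum>n. (cmod (\<zeta> n y))\<^sup>2)) (sqrt (\<Sum>n. (cmod (\<zeta> n x))\<^sup>2)) < \<epsilon>"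
        using tri[OF x yD] tri[OF yD x] F(4) y unfolding dist_real_def by fastforce
    qed
    then show "\<exists>F e. finite F \<and> F \<subseteq> P \<and> e > 0 \<and> (\<forall>y\<in>sball D F x e. dist (sqrt (\<Sum>n. (cmod (\<zeta> n y))\<^sup>2)) (sqrt (\<Sum>n. (cmod (\<zeta> n x))\<^sup>2)) < \<epsilon>)"
      using F by blast
  qed
  show ?thesis using A B C Dc by blast
qed

end

context rctx
begin

abbreviation "Qs \<equiv> strong_seminorms D P"

lemma cd_bdd:
  assumes \<Phi>: "\<Phi> \<in> Dx" and B: "B \<subseteq> D" "sn_bounded P B"
  shows "\<exists>K. \<forall>v\<in>B. cmod (\<Phi> v) \<le> K"
proof -
  have c: "continuous_map tD euclidean (\<lambda>x. cmod (\<Phi> x))"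
    by (rule continuous_map_norm[OF cd_cont[OF \<Phi>]])
  have h: "\<And>c y. y \<in> D \<Longrightarrow> cmod (\<Phi> (sc c y)) = cmod c * cmod (\<Phi> y)"
    using \<Phi> by (simp add: cd_sc norm_mult)
  obtain F C where "finite F" "F \<subseteq> P" "C \<ge> 0" "\<forall>y\<in>D. cmod (\<Phi> y) \<le> C * (\<Sum>p\<in>F. p y)"
    using cont_dominate[OF c _ h] by auto
  then show ?thesis using bounded_dom[OF B, of F C "\<lambda>x. cmod (\<Phi> x)"] by blast
qed

lemma cd_bdd_diff:
  assumes "\<Phi> \<in> Dx" "\<Psi> \<in> Dx" "B \<subseteq> D" "sn_bounded P B"
  shows "bdd_above ((\<lambda>v. cmod ((\<Phi> - \<Psi>) v)) ` B)"
proof -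
  obtain K1 K2 where K: "\<forall>v\<in>B. cmod (\<Phi> v) \<le> K1" "\<forall>v\<in>B. cmod (\<Psi> v) \<le> K2"
    using cd_bdd assms by meson
  have "\<forall>v\<in>B. cmod ((\<Phi> - \<Psi>) v) \<le> K1 + K2"
  proof
    fix v assume "v \<in> B"
    have "cmod ((\<Phi> - \<Psi>) v) \<le> cmod (\<Phi> v) + cmod (\<Psi> v)" by (simp add: norm_triangle_ineq4)
    then show "cmod ((\<Phi> - \<Psi>) v) \<le> K1 + K2" using K \<open>v \<in> B\<close> by fastforce
  qed
  then show ?thesis by (auto intro: bdd_aboveI2)
qed

lemma topDx: "\<Union>{{y \<in> Dx. \<forall>p\<in>F. p (y - x) < e} | x F e. x \<in> Dx \<and> finite F \<and> F \<subseteq> Qs \<and> e > 0} = Dx"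
  using sn_topspace[of Dx Qs] unfolding sn_topology_def topology_generated_by_topspace by simp

lemma S_cont_strong:
  assumes SD: "\<And>f. f \<in> D \<Longrightarrow> S f \<in> Dx"
    and key: "\<And>q f \<Psi>. q \<in> Qs \<Longrightarrow> f \<in> D \<Longrightarrow> \<Psi> \<in> Dx \<Longrightarrow>
        \<exists>M\<ge>0. \<forall>g\<in>D. q (S g - \<Psi>) \<le> q (S f - \<Psi>) + M * hnorm ip (T g - T f)"
    and Tc: "continuous_map tD (htop ip) T"
  shows "continuous_map tD (sn_topology Dx Qs) S"
  unfolding sn_topology_def[of Dx Qs]
proof (rule continuous_on_generated_topo)
  show "S ` topspace tD \<subseteq> \<Union>{{y \<in> Dx. \<forall>p\<in>F. p (y - x) < e} | x F e. x \<in> Dx \<and> finite F \<and> F \<subseteq> Qs \<and> e > 0}"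
    unfolding topDx using SD by auto
  fix U assume "U \<in> {{y \<in> Dx. \<forall>p\<in>F. p (y - x) < e} | x F e. x \<in> Dx \<and> finite F \<and> F \<subseteq> Qs \<and> e > 0}"
  then obtain \<Psi> F e where U: "U = {y \<in> Dx. \<forall>p\<in>F. p (y - \<Psi>) < e}" "\<Psi> \<in> Dx" "finite F" "F \<subseteq> Qs" "e > 0"
    by auto
  show "openin tD (S -` U \<inter> topspace tD)"
  proof (rule sn_openI[OF okD])
    show "S -` U \<inter> topspace tD \<subseteq> D" by simp
    fix f assume "f \<in> S -` U \<inter> topspace tD"
    then have f: "f \<in> D" "\<forall>q\<in>F. q (S f - \<Psi>) < e" using U by auto
    obtain d where d: "d > 0" "\<forall>q\<in>F. q (S f - \<Psi>) + d \<le> e"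
      using min_margin[OF U(3) f(2) U(5)] by blast
    have "\<forall>q\<in>F. \<exists>M. M \<ge> 0 \<and> (\<forall>g\<in>D. q (S g - \<Psi>) \<le> q (S f - \<Psi>) + M * hnorm ip (T g - T f))"
      using key U(2,4) f(1) by blast
    then obtain M where M: "\<forall>q\<in>F. M q \<ge> 0 \<and> (\<forall>g\<in>D. q (S g - \<Psi>) \<le> q (S f - \<Psi>) + M q * hnorm ip (T g - T f))"
      by (rule bchoice_iff[THEN iffD1, elim_format]) blast
    define Mt where "Mt = (\<Sum>q\<in>F. M q)"
    have Mt0: "Mt \<ge> 0" unfolding Mt_def using M by (simp add: sum_nonneg)
    have Mq: "\<forall>q\<in>F. M q \<le> Mt" unfolding Mt_def using M U(3) by (auto intro: member_le_sum)
    have dd: "d / (Mt + 1) > 0" using d Mt0 by simp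
    obtain F' r where F': "finite F'" "F' \<subseteq> P" "r > 0" "\<forall>g\<in>sball D F' f r. hnorm ip (T g - T f) < d / (Mt + 1)"
      using contH_crit[OF Tc f(1) dd] by blast
    have "sball D F' f r \<subseteq> S -` U \<inter> topspace tD"
    proof
      fix g assume g: "g \<in> sball D F' f r"
      then have gD: "g \<in> D" using sball_sub by blast
      have t: "hnorm ip (T g - T f) < d / (Mt + 1)" using F'(4) g by blast
      have "\<forall>q\<in>F. q (S g - \<Psi>) < e"
      proof
        fix q assume q: "q \<in> F"
        have "M q * hnorm ip (T g - T f) \<le> (Mt + 1) * hnorm ip (T g - T f)"
          using Mq q hnorm_nonneg by (intro mult_right_mono) auto
        also have "\<dots> < (Mt + 1) * (d / (Mt + 1))" using t Mt0 by (intro mult_strict_left_mono) auto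
        also have "\<dots> = d" using Mt0 by simp
        finally have "M q * hnorm ip (T g - T f) < d" .
        then show "q (S g - \<Psi>) < e" using M q gD d(2) by fastforce
      qed
      then show "g \<in> S -` U \<inter> topspace tD" using U(1) SD gD by simp
    qed
    then show "\<exists>F e. finite F \<and> F \<subseteq> P \<and> e > 0 \<and> sball D F f e \<subseteq> S -` U \<inter> topspace tD"
      using F' by blast
  qed
qed

end

context bctx
begin

lemma i_to_iii:
  assumes TC: "in_C_DH sc ip D P T" and onb: "orthonormal_basis sc ip (\<lambda>n. T (\<xi> n))"
  defines "S \<equiv> (\<lambda>f g. if g \<in> D then ip (T f) (T g) else 0)"
  shows "in_L_DDx sc D P S \<and> (\<forall>f\<in>D. Im (S f f) = 0 \<and> Re (S f f) \<ge> 0)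
         \<and> (\<forall>n k. S (\<xi> n) (\<xi> k) = (if n = k then 1 else 0))"
proof -
  have Tadd: "\<And>x y. x \<in> D \<Longrightarrow> y \<in> D \<Longrightarrow> T (x + y) = T x + T y" using TC unfolding in_C_DH_def by blast
  have Tsc: "\<And>c x. x \<in> D \<Longrightarrow> T (sc c x) = sc c (T x)" using TC unfolding in_C_DH_def by blast
  have Tc: "continuous_map tD (htop ip) T" using TC unfolding in_C_DH_def by blast
  have SD: "S x \<in> Dx" if x: "x \<in> D" for x
    unfolding conj_dual_def
  proof (intro CollectI conjI ballI allI impI)
    fix y z assume "y \<in> D" "z \<in> D"
    then show "S x (y + z) = S x y + S x z" unfolding S_def using Dadd by (simp add: Tadd ip_add_right)
  next
    fix c y assume "y \<in> D"
    then show "S x (sc c y) = cnj c * S x y" unfolding S_def using Dsc by (simp add: Tsc ip_sc_right)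
  next
    fix y assume "y \<notin> D" then show "S x y = 0" unfolding S_def by simp
  next
    show "continuous_map tD euclidean (S x)"
    proof (rule cont_crit_D_I)
      fix y and \<epsilon> :: real assume y: "y \<in> D" and eps: "\<epsilon> > 0"
      have e1: "\<epsilon> / (hnorm ip (T x) + 1) > 0" using eps hnorm_nonneg by (simp add: add_nonneg_pos)
      obtain F d where F: "finite F" "F \<subseteq> P" "d > 0" "\<forall>z\<in>sball D F y d. hnorm ip (T z - T y) < \<epsilon> / (hnorm ip (T x) + 1)"
        using contH_crit[OF Tc y e1] by meson
      have "\<forall>z\<in>sball D F y d. dist (S x z) (S x y) < \<epsilon>"
      proof
        fix z assume z: "z \<in> sball D F y d"
        then have zD: "z \<in> D" using sball_sub by blast
        have "S x z - S x y = ip (T x) (T z - T y)" unfolding S_def using zD y by (simp add: ip_diff_right)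
        then have "cmod (S x z - S x y) \<le> hnorm ip (T x) * hnorm ip (T z - T y)"
          using cauchy_schwarz by simp
        also have "\<dots> \<le> (hnorm ip (T x) + 1) * hnorm ip (T z - T y)"
          using hnorm_nonneg by (intro mult_right_mono) auto
        also have "\<dots> < (hnorm ip (T x) + 1) * (\<epsilon> / (hnorm ip (T x) + 1))"
          using F(4) z hnorm_nonneg by (intro mult_strict_left_mono) (auto simp: add_nonneg_pos)
        also have "\<dots> = \<epsilon>" using hnorm_nonneg[of "T x"] by (simp add: add_nonneg_pos)
        finally show "dist (S x z) (S x y) < \<epsilon>" by (simp add: dist_norm)
      qed
      then show "\<exists>F e. finite F \<and> F \<subseteq> P \<and> e > 0 \<and> (\<forall>z\<in>sball D F y e. dist (S x z) (S x y) < \<epsilon>)"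
        using F by blast
    qed
  qed
  have Sadd: "S (x + y) = S x + S y" if "x \<in> D" "y \<in> D" for x y
    unfolding S_def using that by (auto simp: Tadd ip_add_left)
  have Ssc: "S (sc c x) = fsc c (S x)" if "x \<in> D" for c x
    unfolding S_def fsc_def using that by (auto simp: Tsc ip_sc_left)
  have nT: "continuous_map tD euclidean (\<lambda>x. hnorm ip (T x))"
  proof (rule cont_crit_D_I)
    fix y and \<epsilon> :: real assume y: "y \<in> D" and eps: "\<epsilon> > 0"
    obtain F d where F: "finite F" "F \<subseteq> P" "d > 0" "\<forall>z\<in>sball D F y d. hnorm ip (T z - T y) < \<epsilon>"
      using contH_crit[OF Tc y eps] by meson
    then show "\<exists>F e. finite F \<and> F \<subseteq> P \<and> e > 0 \<and> (\<forall>z\<in>sball D F y e. dist (hnorm ip (T z)) (hnorm ip (T y)) < \<epsilon>)"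
      using hnorm_rev_triangle unfolding dist_real_def by (meson le_less_trans)
  qed
  obtain FT CT where FT: "finite FT" "FT \<subseteq> P" "CT \<ge> 0" "\<forall>y\<in>D. hnorm ip (T y) \<le> CT * (\<Sum>p\<in>FT. p y)"
    using cont_dominate[OF nT hnorm_nonneg] Tsc hnorm_sc by auto
  have key: "\<exists>M\<ge>0. \<forall>g\<in>D. q (S g - \<Psi>) \<le> q (S f - \<Psi>) + M * hnorm ip (T g - T f)"
    if q: "q \<in> Qs" and f: "f \<in> D" and \<Psi>: "\<Psi> \<in> Dx" for q f \<Psi>
  proof -
    obtain B where B: "q = (\<lambda>\<Phi>. Sup ((\<lambda>v. cmod (\<Phi> v)) ` B))" "B \<noteq> {}" "B \<subseteq> D" "sn_bounded P B"
      using q unfolding strong_seminorms_def by blast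
    obtain K where K: "\<forall>v\<in>B. hnorm ip (T v) \<le> K"
      using bounded_dom[OF B(3,4) FT(1,2,3), of "\<lambda>y. hnorm ip (T y)"] FT(4) by blast
    define M where "M = max K 0"
    have bd: "bdd_above ((\<lambda>v. cmod ((S f - \<Psi>) v)) ` B)"
      by (rule cd_bdd_diff[OF SD[OF f] \<Psi> B(3,4)])
    have "\<forall>g\<in>D. q (S g - \<Psi>) \<le> q (S f - \<Psi>) + M * hnorm ip (T g - T f)"
    proof
      fix g assume g: "g \<in> D"
      have "Sup ((\<lambda>v. cmod ((S g - \<Psi>) v)) ` B) \<le> Sup ((\<lambda>v. cmod ((S f - \<Psi>) v)) ` B) + M * hnorm ip (T g - T f)"
      proof (rule cSUP_least[OF B(2)])
        fix v assume v: "v \<in> B"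
        then have vD: "v \<in> D" using B(3) by blast
        have "(S g - \<Psi>) v = ip (T g - T f) (T v) + (S f - \<Psi>) v"
          unfolding S_def using vD by (simp add: ip_diff_left)
        then have "cmod ((S g - \<Psi>) v) \<le> cmod (ip (T g - T f) (T v)) + cmod ((S f - \<Psi>) v)"
          by (metis norm_triangle_ineq)
        also have "cmod (ip (T g - T f) (T v)) \<le> hnorm ip (T g - T f) * hnorm ip (T v)"
          by (rule cauchy_schwarz)
        also have "\<dots> \<le> hnorm ip (T g - T f) * M"
          using K v hnorm_nonneg unfolding M_def by (intro mult_left_mono) auto
        also have "cmod ((S f - \<Psi>) v) \<le> Sup ((\<lambda>v. cmod ((S f - \<Psi>) v)) ` B)"
          using v bd by (rule cSUP_upper)
        finally show "cmod ((S g - \<Psi>) v) \<le> Sup ((\<lambda>v. cmod ((S f - \<Psi>) v)) ` B) + M * hnorm ip (T g - T f)"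
          by (simp add: mult.commute)
      qed
      then show "q (S g - \<Psi>) \<le> q (S f - \<Psi>) + M * hnorm ip (T g - T f)" using B(1) by simp
    qed
    moreover have "M \<ge> 0" unfolding M_def by simp
    ultimately show ?thesis by blast
  qed
  have cont: "continuous_map tD (sn_topology Dx Qs) S"
    by (rule S_cont_strong[of S T, OF SD key Tc])
  have L: "in_L_DDx sc D P S"
    unfolding in_L_DDx_def using SD Sadd Ssc cont by blast
  have pos: "\<forall>f\<in>D. Im (S f f) = 0 \<and> Re (S f f) \<ge> 0"
    unfolding S_def using ip_self_Im ip_self_Re by simp
  have bi: "\<forall>n k. S (\<xi> n) (\<xi> k) = (if n = k then 1 else 0)"
    unfolding S_def using onb xiD unfolding orthonormal_basis_def by simp
  show ?thesis using L pos bi by blast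
qed

end

context bctx
begin

primrec GS :: "nat \<Rightarrow> nat \<Rightarrow> 'a" where
  "GS 0 = (\<lambda>k. 0)"
| "GS (Suc n) = (GS n)(n := sc (complex_of_real (1 / hnorm ip (\<xi> n - (\<Sum>k<n. sc (ip (\<xi> n) (GS n k)) (GS n k)))))
                            (\<xi> n - (\<Sum>k<n. sc (ip (\<xi> n) (GS n k)) (GS n k))))"

definition gse :: "nat \<Rightarrow> 'a" where "gse n = GS (Suc n) n"

definition gsu :: "nat \<Rightarrow> 'a" where "gsu n = \<xi> n - (\<Sum>k<n. sc (ip (\<xi> n) (gse k)) (gse k))"

lemma GS_stable: "k < m \<Longrightarrow> GS m k = gse k"
proof (induction m)
  case 0 then show ?case by simp
next
  case (Suc m)
  show ?case
  proof (cases "k = m")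
    case True then show ?thesis unfolding gse_def by simp
  next
    case False then show ?thesis using Suc by simp
  qed
qed

lemma gse_eq: "gse n = sc (complex_of_real (1 / hnorm ip (gsu n))) (gsu n)"
proof -
  have "(\<Sum>k<n. sc (ip (\<xi> n) (GS n k)) (GS n k)) = (\<Sum>k<n. sc (ip (\<xi> n) (gse k)) (gse k))"
    by (intro sum.cong) (auto simp: GS_stable)
  then show ?thesis unfolding gse_def gsu_def by simp
qed

lemma spanX_I: "x = (\<Sum>j<m. sc (c j) (\<xi> j)) \<Longrightarrow> x \<in> spanX m"
  unfolding spanX_def by blast

lemma spanX_E: "x \<in> spanX m \<Longrightarrow> \<exists>c. x = (\<Sum>j<m. sc (c j) (\<xi> j))"
  unfolding spanX_def by blast

lemma spanX_add: "x \<in> spanX m \<Longrightarrow> y \<in> spanX m \<Longrightarrow> x + y \<in> spanX m"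
proof -
  assume "x \<in> spanX m" "y \<in> spanX m"
  then obtain c d where "x = (\<Sum>j<m. sc (c j) (\<xi> j))" "y = (\<Sum>j<m. sc (d j) (\<xi> j))"
    using spanX_E by meson
  then have "x + y = (\<Sum>j<m. sc (c j + d j) (\<xi> j))" by (simp add: sc_add_left sum.distrib)
  then show ?thesis by (rule spanX_I)
qed

lemma spanX_sc: "x \<in> spanX m \<Longrightarrow> sc a x \<in> spanX m"
proof -
  assume "x \<in> spanX m"
  then obtain c where "x = (\<Sum>j<m. sc (c j) (\<xi> j))" using spanX_E by meson
  then have "sc a x = (\<Sum>j<m. sc (a * c j) (\<xi> j))" by (simp add: sc_sum_right sc_assoc)
  then show ?thesis by (rule spanX_I)
qed

lemma spanX_0: "0 \<in> spanX m"
proof -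
  have "0 = (\<Sum>j<m. sc 0 (\<xi> j))" by simp
  then show ?thesis by (rule spanX_I)
qed

lemma spanX_diff: "x \<in> spanX m \<Longrightarrow> y \<in> spanX m \<Longrightarrow> x - y \<in> spanX m"
  using spanX_add[of x m "sc (-1) y"] spanX_sc[of y m "-1"] by (simp add: sc_minus_one)

lemma spanX_sum: "(\<And>i. i \<in> A \<Longrightarrow> f i \<in> spanX m) \<Longrightarrow> sum f A \<in> spanX m"
  by (induction A rule: infinite_finite_induct) (auto intro: spanX_add spanX_0)

lemma spanX_mono: "m \<le> m' \<Longrightarrow> x \<in> spanX m \<Longrightarrow> x \<in> spanX m'"
proof -
  assume mm: "m \<le> m'" and "x \<in> spanX m"
  then obtain c where c: "x = (\<Sum>j<m. sc (c j) (\<xi> j))" using spanX_E by meson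
  define d where "d j = (if j < m then c j else 0)" for j
  have "(\<Sum>j<m'. sc (d j) (\<xi> j)) = (\<Sum>j<m. sc (d j) (\<xi> j))"
    by (rule sum.mono_neutral_right) (use mm in \<open>auto simp: d_def\<close>)
  also have "\<dots> = x" unfolding c by (intro sum.cong) (auto simp: d_def)
  finally show ?thesis by (intro spanX_I) (rule sym)
qed

lemma spanX_xi: "j < m \<Longrightarrow> \<xi> j \<in> spanX m"
proof -
  assume j: "j < m"
  define d :: "nat \<Rightarrow> complex" where "d i = (if i = j then 1 else 0)" for i
  have "(\<Sum>i<m. sc (d i) (\<xi> i)) = (\<Sum>i<m. if i = j then \<xi> j else 0)"
    by (intro sum.cong) (auto simp: d_def)
  also have "\<dots> = \<xi> j" using j by (simp add: sum.delta')
  finally show ?thesis by (intro spanX_I) (rule sym)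
qed

lemma GS_props:
  "(\<forall>i<n. \<forall>j<n. ip (gse i) (gse j) = (if i = j then 1 else 0)) \<and> (\<forall>i<n. gse i \<in> spanX (Suc i))"
proof (induction n)
  case 0 then show ?case by simp
next
  case (Suc n)
  then have orth: "\<forall>i<n. \<forall>j<n. ip (gse i) (gse j) = (if i = j then 1 else 0)"
    and sp: "\<forall>i<n. gse i \<in> spanX (Suc i)" by auto
  have spn: "gse k \<in> spanX n" if "k < n" for k
    using sp that spanX_mono[of "Suc k" n] by simp
  have sumsp: "(\<Sum>k<n. sc (ip (\<xi> n) (gse k)) (gse k)) \<in> spanX n"
    by (rule spanX_sum) (auto intro: spanX_sc spn)
  have unz: "gsu n \<noteq> 0"
  proof
    assume "gsu n = 0"
    then have "\<xi> n = (\<Sum>k<n. sc (ip (\<xi> n) (gse k)) (gse k))" unfolding gsu_def by simp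
    then show False using lin_indep[of n] sumsp by simp
  qed
  then have nu: "hnorm ip (gsu n) > 0" using hnorm_nonneg hnorm_eq_zero by (metis less_eq_real_def)
  have usp: "gsu n \<in> spanX (Suc n)"
    unfolding gsu_def using spanX_xi[of n "Suc n"] spanX_mono[OF _ sumsp, of "Suc n"]
    by (intro spanX_diff) auto
  have esp: "gse n \<in> spanX (Suc n)" unfolding gse_eq[of n] by (rule spanX_sc[OF usp])
  have uorth: "ip (gsu n) (gse j) = 0" if j: "j < n" for j
  proof -
    have "ip (gsu n) (gse j) = ip (\<xi> n) (gse j) - (\<Sum>k<n. ip (\<xi> n) (gse k) * ip (gse k) (gse j))"
      unfolding gsu_def by (simp add: ip_diff_left ip_sum_left ip_sc_left)
    also have "(\<Sum>k<n. ip (\<xi> n) (gse k) * ip (gse k) (gse j)) = (\<Sum>k<n. if k = j then ip (\<xi> n) (gse j) else 0)"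
      using orth j by (intro sum.cong) auto
    also have "\<dots> = ip (\<xi> n) (gse j)" using j by (simp add: sum.delta')
    finally show ?thesis by simp
  qed
  have eorth1: "ip (gse n) (gse j) = 0" if "j < n" for j
    unfolding gse_eq[of n] by (simp add: ip_sc_left uorth that)
  have eorth2: "ip (gse j) (gse n) = 0" if "j < n" for j
    using eorth1[OF that] ip_sym by (metis complex_cnj_zero)
  have enn: "ip (gse n) (gse n) = 1"
  proof -
    have "ip (gse n) (gse n) = complex_of_real (1 / hnorm ip (gsu n)) * cnj (complex_of_real (1 / hnorm ip (gsu n))) * ip (gsu n) (gsu n)"
      unfolding gse_eq[of n] by (simp add: ip_sc_left ip_sc_right)
    also have "\<dots> = complex_of_real ((1 / hnorm ip (gsu n))\<^sup>2 * (hnorm ip (gsu n))\<^sup>2)"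
      unfolding ip_self_hnorm by (simp add: power2_eq_square)
    also have "\<dots> = 1" using nu by (simp add: field_simps)
    finally show ?thesis .
  qed
  show ?case
  proof (intro conjI allI impI)
    fix i j assume "i < Suc n" "j < Suc n"
    then show "ip (gse i) (gse j) = (if i = j then 1 else 0)"
      using orth eorth1 eorth2 enn by (cases "i = n"; cases "j = n") auto
  next
    fix i assume "i < Suc n"
    then show "gse i \<in> spanX (Suc i)" using sp esp by (cases "i = n") auto
  qed
qed

lemma gse_orthon: "orthon gse"
  unfolding orthon_def
proof (intro allI)
  fix n m
  show "ip (gse n) (gse m) = (if n = m then 1 else 0)"
    using GS_props[of "Suc (max n m)"] by simp
qed

lemma gsu_nz: "hnorm ip (gsu n) > 0"
proof -
  have sp: "\<forall>i<n. gse i \<in> spanX (Suc i)" using GS_props[of n] by simp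
  have sumsp: "(\<Sum>k<n. sc (ip (\<xi> n) (gse k)) (gse k)) \<in> spanX n"
  proof (rule spanX_sum)
    fix k assume "k \<in> {..<n}"
    then have "gse k \<in> spanX n" using sp spanX_mono[of "Suc k" n] by simp
    then show "sc (ip (\<xi> n) (gse k)) (gse k) \<in> spanX n" by (rule spanX_sc)
  qed
  have "gsu n \<noteq> 0"
  proof
    assume "gsu n = 0"
    then have "\<xi> n = (\<Sum>k<n. sc (ip (\<xi> n) (gse k)) (gse k))" unfolding gsu_def by simp
    then show False using lin_indep[of n] sumsp by simp
  qed
  then show ?thesis using hnorm_nonneg hnorm_eq_zero by (metis less_eq_real_def)
qed

definition SE :: "'a set" where
  "SE = {(\<Sum>i\<in>F. sc (c i) (gse i)) | F c. finite F}"

lemma SE_I: "finite F \<Longrightarrow> x = (\<Sum>i\<in>F. sc (c i) (gse i)) \<Longrightarrow> x \<in> SE"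
  unfolding SE_def by blast

lemma SE_E: "x \<in> SE \<Longrightarrow> \<exists>F c. finite F \<and> x = (\<Sum>i\<in>F. sc (c i) (gse i))"
  unfolding SE_def by blast

lemma SE_add: "x \<in> SE \<Longrightarrow> y \<in> SE \<Longrightarrow> x + y \<in> SE"
proof -
  assume "x \<in> SE" "y \<in> SE"
  then obtain F1 c1 F2 c2 where x: "x = (\<Sum>i\<in>F1. sc (c1 i) (gse i))" "finite F1"
    and y: "y = (\<Sum>i\<in>F2. sc (c2 i) (gse i))" "finite F2" using SE_E by meson
  define c where "c i = (if i \<in> F1 then c1 i else 0) + (if i \<in> F2 then c2 i else 0)" for i
  have "(\<Sum>i\<in>F1 \<union> F2. sc (if i \<in> F1 then c1 i else 0) (gse i)) = x"
    unfolding x by (rule sum.mono_neutral_cong_right) (use x y in auto)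
  moreover have "(\<Sum>i\<in>F1 \<union> F2. sc (if i \<in> F2 then c2 i else 0) (gse i)) = y"
    unfolding y by (rule sum.mono_neutral_cong_right) (use x y in auto)
  ultimately have "x + y = (\<Sum>i\<in>F1 \<union> F2. sc (c i) (gse i))"
    unfolding c_def by (simp add: sc_add_left sum.distrib)
  then show ?thesis using x(2) y(2) by (intro SE_I[of "F1 \<union> F2"]) auto
qed

lemma SE_sc: "x \<in> SE \<Longrightarrow> sc a x \<in> SE"
proof -
  assume "x \<in> SE"
  then obtain F c where x: "x = (\<Sum>i\<in>F. sc (c i) (gse i))" "finite F" using SE_E by meson
  then have "sc a x = (\<Sum>i\<in>F. sc (a * c i) (gse i))" by (simp add: sc_sum_right sc_assoc)
  then show ?thesis using x(2) by (intro SE_I)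
qed

lemma SE_0: "0 \<in> SE"
proof -
  have "(0::'a) = (\<Sum>i\<in>{}. sc 0 (gse i))" by simp
  then show ?thesis by (rule SE_I[rotated]) simp
qed

lemma SE_sum: "(\<And>i. i \<in> A \<Longrightarrow> f i \<in> SE) \<Longrightarrow> sum f A \<in> SE"
  by (induction A rule: infinite_finite_induct) (auto intro: SE_add SE_0)

lemma xi_SE: "\<xi> n \<in> SE"
proof -
  have "\<xi> n = gsu n + (\<Sum>k<n. sc (ip (\<xi> n) (gse k)) (gse k))" unfolding gsu_def by simp
  also have "gsu n = sc (complex_of_real (hnorm ip (gsu n))) (gse n)"
    unfolding gse_eq[of n] using gsu_nz[of n] by (simp add: sc_assoc)
  finally have eq: "\<xi> n = sc (complex_of_real (hnorm ip (gsu n))) (gse n) + (\<Sum>k<n. sc (ip (\<xi> n) (gse k)) (gse k))" .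
  have a: "sc (complex_of_real (hnorm ip (gsu n))) (gse n) \<in> SE"
  proof -
    have "sc (complex_of_real (hnorm ip (gsu n))) (gse n) = (\<Sum>i\<in>{n}. sc (complex_of_real (hnorm ip (gsu n))) (gse i))" by simp
    then show ?thesis by (rule SE_I[rotated]) simp
  qed
  have b: "(\<Sum>k<n. sc (ip (\<xi> n) (gse k)) (gse k)) \<in> SE" by (rule SE_I[OF _ refl]) simp
  show ?thesis using SE_add[OF a b] eq by simp
qed

lemma SE_dense: "(htop ip) closure_of SE = UNIV"
proof (rule set_eqI, rule iffI)
  fix x show "x \<in> (htop ip) closure_of SE \<Longrightarrow> x \<in> UNIV" by simp
next
  fix x :: 'a
  show "x \<in> (htop ip) closure_of SE"
    unfolding in_closure_of
  proof (intro conjI allI impI)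
    show "x \<in> topspace (htop ip)" by simp
    fix U assume U: "x \<in> U \<and> openin (htop ip) U"
    have "x \<in> (htop ip) closure_of D" using denseD by simp
    then obtain y where y: "y \<in> D" "y \<in> U" using U unfolding in_closure_of by blast
    have oU: "openin (sn_topology UNIV {hnorm ip}) U" using U unfolding htop_def by simp
    obtain F r where F: "finite F" "F \<subseteq> {hnorm ip}" "r > 0" "sball UNIV F y r \<subseteq> U"
      using sn_openD[OF okH oU y(2)] by blast
    obtain N where N: "hnorm ip ((\<Sum>n<N. sc (basis_coeff sc D P \<xi> n y) (\<xi> n)) - y) < r"
      using eventually_happens'[OF _ lim_to_H[OF bcoeff_lim[OF y(1)] F(3)]] by auto
    have "(\<Sum>n<N. sc (basis_coeff sc D P \<xi> n y) (\<xi> n)) \<in> sball UNIV F y r"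
      using N F(2) unfolding sball_def by auto
    moreover have "(\<Sum>n<N. sc (basis_coeff sc D P \<xi> n y) (\<xi> n)) \<in> SE"
      by (rule SE_sum) (auto intro: SE_sc xi_SE)
    ultimately show "\<exists>z. z \<in> SE \<and> z \<in> U" using F(4) by blast
  qed
qed

end

context hil
begin

lemma hlim_eventually: "eventually (\<lambda>n. s n = a) sequentially \<Longrightarrow> hlim s a"
  unfolding hlim_def by (auto elim: eventually_mono)

end

lemma sum_split_ivl:
  fixes f :: "nat \<Rightarrow> 'b::ab_group_add"
  assumes "m \<le> n"
  shows "sum f {..<n} - sum f {..<m} = sum f {m..<n}"
proof -
  have "{..<n} = {..<m} \<union> {m..<n}" using assms by auto
  moreover have "{..<m} \<inter> {m..<n} = {}" by auto
  ultimately have "sum f {..<n} = sum f {..<m} + sum f {m..<n}"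
    by (simp add: sum.union_disjoint)
  then show ?thesis by simp
qed

context bctx
begin

lemma ii_to_i:
  assumes Z1: "\<forall>n. \<zeta> n \<in> Dx" and Z2: "\<forall>n k. \<zeta> n (\<xi> k) = (if n = k then 1 else 0)"
    and Z3: "\<forall>f\<in>D. summable (\<lambda>n. (cmod (\<zeta> n f))\<^sup>2)"
    and Z4: "continuous_map tD euclidean (\<lambda>f. sqrt (\<Sum>n. (cmod (\<zeta> n f))\<^sup>2))"
  shows "riesz_like_basis sc ip D P \<xi>"
proof -
  define ps where "ps f N = (\<Sum>n<N. sc (cnj (\<zeta> n f)) (gse n))" for f N
  define pz where "pz f = sqrt (\<Sum>n. (cmod (\<zeta> n f))\<^sup>2)" for f
  have on: "orthon gse" by (rule gse_orthon)
  have psn: "(hnorm ip (ps f N))\<^sup>2 = (\<Sum>n<N. (cmod (\<zeta> n f))\<^sup>2)" for f N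
    unfolding ps_def using pyth[OF on, of "{..<N}" "\<lambda>n. cnj (\<zeta> n f)"] by simp
  have cauchy: "\<exists>N. \<forall>m\<ge>N. \<forall>n\<ge>N. hnorm ip (ps f m - ps f n) < e" if f: "f \<in> D" and e: "e > 0" for f e
  proof -
    have "e\<^sup>2 > 0" using e by simp
    then obtain N where N: "\<forall>m\<ge>N. \<forall>n. norm (\<Sum>i\<in>{m..<n}. (cmod (\<zeta> i f))\<^sup>2) < e\<^sup>2"
      using Z3 f summable_Cauchy by metis
    have lt: "hnorm ip (ps f n - ps f m) < e" if "N \<le> m" "m \<le> n" for m n
    proof -
      have "ps f n - ps f m = (\<Sum>i\<in>{m..<n}. sc (cnj (\<zeta> i f)) (gse i))"
        unfolding ps_def by (rule sum_split_ivl[OF that(2)])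
      then have "(hnorm ip (ps f n - ps f m))\<^sup>2 = (\<Sum>i\<in>{m..<n}. (cmod (\<zeta> i f))\<^sup>2)"
        using pyth[OF on, of "{m..<n}" "\<lambda>i. cnj (\<zeta> i f)"] by simp
      also have "\<dots> < e\<^sup>2"
      proof -
        have "norm (\<Sum>i\<in>{m..<n}. (cmod (\<zeta> i f))\<^sup>2) < e\<^sup>2" using N that(1) by blast
        moreover have "(\<Sum>i\<in>{m..<n}. (cmod (\<zeta> i f))\<^sup>2) \<ge> 0" by (simp add: sum_nonneg)
        ultimately show ?thesis by simp
      qed
      finally show ?thesis using e hnorm_nonneg by (meson power_less_imp_less_base less_imp_le)
    qed
    show ?thesis
    proof (intro exI[of _ N] allI impI)
      fix m n assume "N \<le> m" "N \<le> n"
      then show "hnorm ip (ps f m - ps f n) < e"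
        using lt[of m n] lt[of n m] hnorm_commute[of "ps f m" "ps f n"] by (cases "m \<le> n") auto
    qed
  qed
  define T where "T f = (SOME y. hlim (ps f) y)" for f
  have Tlim: "hlim (ps f) (T f)" if f: "f \<in> D" for f
    unfolding T_def by (rule someI_ex, rule hcomplete) (use cauchy f in blast)
  have pz0: "pz 0 = 0"
  proof -
    have "\<And>n. \<zeta> n 0 = 0" using Z1 cd_zero by blast
    then show ?thesis unfolding pz_def by simp
  qed
  have Tnorm: "hnorm ip (T f) = pz f" if f: "f \<in> D" for f
  proof -
    have 1: "(\<lambda>N. hnorm ip (ps f N)) \<longlonglongrightarrow> hnorm ip (T f)" by (rule hlim_norm[OF Tlim[OF f]])
    have "(\<lambda>N. (\<Sum>n<N. (cmod (\<zeta> n f))\<^sup>2)) \<longlonglongrightarrow> (\<Sum>n. (cmod (\<zeta> n f))\<^sup>2)"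
      using summable_LIMSEQ Z3 f by blast
    then have "(\<lambda>N. sqrt (\<Sum>n<N. (cmod (\<zeta> n f))\<^sup>2)) \<longlonglongrightarrow> pz f"
      unfolding pz_def by (rule tendsto_real_sqrt)
    moreover have "sqrt (\<Sum>n<N. (cmod (\<zeta> n f))\<^sup>2) = hnorm ip (ps f N)" for N
      using psn[of f N] hnorm_nonneg by (metis real_sqrt_abs abs_of_nonneg)
    ultimately have "(\<lambda>N. hnorm ip (ps f N)) \<longlonglongrightarrow> pz f" by simp
    then show ?thesis using 1 LIMSEQ_unique by blast
  qed
  have Tadd: "T (f + g) = T f + T g" if f: "f \<in> D" and g: "g \<in> D" for f g
  proof -
    have "ps (f + g) = (\<lambda>N. ps f N + ps g N)"
      unfolding ps_def using f g Z1 by (auto simp: cd_add sc_add_left sum.distrib)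
    then have "hlim (ps (f + g)) (T f + T g)" using hlim_add[OF Tlim[OF f] Tlim[OF g]] by simp
    then show ?thesis using Tlim[OF Dadd[OF f g]] hlim_unique by blast
  qed
  have Tsc: "T (sc c f) = sc c (T f)" if f: "f \<in> D" for c f
  proof -
    have "ps (sc c f) = (\<lambda>N. sc c (ps f N))"
      unfolding ps_def using f Z1 by (auto simp: cd_sc sc_sum_right sc_assoc)
    then have "hlim (ps (sc c f)) (sc c (T f))" using hlim_sc[OF Tlim[OF f]] by simp
    then show ?thesis using Tlim[OF Dsc[OF f]] hlim_unique by blast
  qed
  have Tdiff: "T g - T f = T (g - f)" if "f \<in> D" "g \<in> D" for f g
    using Tadd[of "g - f" f] that Ddiff by simp
  have Txi: "T (\<xi> k) = gse k" for k
  proof -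
    have "eventually (\<lambda>N. ps (\<xi> k) N = gse k) sequentially"
    proof (rule eventually_sequentiallyI[of "Suc k"])
      fix N assume N: "Suc k \<le> N"
      have "ps (\<xi> k) N = (\<Sum>n<N. if n = k then gse k else 0)"
        unfolding ps_def using Z2 by (intro sum.cong) auto
      also have "\<dots> = gse k" using N by (simp add: sum.delta')
      finally show "ps (\<xi> k) N = gse k" .
    qed
    then have "hlim (ps (\<xi> k)) (gse k)" by (rule hlim_eventually)
    then show ?thesis using Tlim[OF xiD] hlim_unique by blast
  qed
  have Tc: "continuous_map tD (htop ip) T"
    unfolding continuous_map_def
  proof (intro conjI allI impI)
    show "T \<in> topspace tD \<rightarrow> topspace (htop ip)" by simp
    fix U assume U: "openin (htop ip) U"
    have oU: "openin (sn_topology UNIV {hnorm ip}) U" using U unfolding htop_def by simp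
    show "openin tD {x \<in> topspace tD. T x \<in> U}"
    proof (rule sn_openI[OF okD])
      show "{x \<in> topspace tD. T x \<in> U} \<subseteq> D" by auto
      fix f assume "f \<in> {x \<in> topspace tD. T x \<in> U}"
      then have f: "f \<in> D" "T f \<in> U" by auto
      obtain F r where F: "finite F" "F \<subseteq> {hnorm ip}" "r > 0" "sball UNIV F (T f) r \<subseteq> U"
        using sn_openD[OF okH oU f(2)] by blast
      obtain F' d where F': "finite F'" "F' \<subseteq> P" "d > 0" "\<forall>h\<in>sball D F' 0 d. dist (pz h) (pz 0) < r"
        using cont_crit_D[OF Z4[folded pz_def] D0 F(3)] by blast
      have "sball D F' f d \<subseteq> {x \<in> topspace tD. T x \<in> U}"
      proof
        fix g assume g: "g \<in> sball D F' f d"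
        then have gD: "g \<in> D" using sball_sub by blast
        have "g - f \<in> sball D F' 0 d" using g Ddiff[OF gD f(1)] unfolding sball_def by simp
        then have "pz (g - f) < r" using F'(4) pz0 by (fastforce simp: dist_real_def)
        then have "hnorm ip (T g - T f) < r" using Tdiff[OF f(1) gD] Tnorm[OF Ddiff[OF gD f(1)]] by simp
        then have "T g \<in> sball UNIV F (T f) r" using F(2) unfolding sball_def by auto
        then show "g \<in> {x \<in> topspace tD. T x \<in> U}" using F(4) gD by auto
      qed
      then show "\<exists>F e. finite F \<and> F \<subseteq> P \<and> e > 0 \<and> sball D F f e \<subseteq> {x \<in> topspace tD. T x \<in> U}"
        using F' by blast
    qed
  qed
  have inj: "inj_on T D"
  proof (rule inj_onI)
    fix f g assume f: "f \<in> D" and g: "g \<in> D" and eq: "T f = T g"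
    define h where "h = f - g"
    have hD: "h \<in> D" unfolding h_def using Ddiff f g by simp
    have "pz h = 0" using Tnorm[OF hD] Tdiff[OF g f] eq unfolding h_def by simp
    then have "(\<Sum>n. (cmod (\<zeta> n h))\<^sup>2) = 0" unfolding pz_def by simp
    then have z: "\<forall>n. (cmod (\<zeta> n h))\<^sup>2 = 0" using suminf_eq_zero_iff[OF Z3[rule_format, OF hD]] by simp
    have bc: "basis_coeff sc D P \<xi> n h = 0" for n
      using coef_lemma[of \<zeta> n _ h] Z1 Z2 bcoeff_lim[OF hD] z by simp
    have "limitin tD (\<lambda>N. \<Sum>n<N. sc (basis_coeff sc D P \<xi> n h) (\<xi> n)) h sequentially"
      by (rule bcoeff_lim[OF hD])
    then have "limitin tD (\<lambda>N. 0) h sequentially" by (simp add: bc)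
    moreover have "limitin tD (\<lambda>N. 0) 0 sequentially" by simp
    ultimately have "h = 0" using lim_unique by blast
    then show "f = g" unfolding h_def by simp
  qed
  have TC: "in_C_DH sc ip D P T" unfolding in_C_DH_def using Tadd Tsc Tc by blast
  have fe: "(\<lambda>n. T (\<xi> n)) = gse" using Txi by auto
  have onb: "orthonormal_basis sc ip (\<lambda>n. T (\<xi> n))"
    unfolding orthonormal_basis_def fe using on SE_dense unfolding orthon_def SE_def by blast
  have sb: "schauder_basis_sn sc D P \<xi>" by (rule schauder_of_zeta[OF Z1 Z2])
  show ?thesis unfolding riesz_like_basis_def using sb TC inj onb by blast
qed

end

context rctx
begin

lemma Dx_lincomb:
  fixes N :: nat and a :: "nat \<Rightarrow> complex"
  assumes "\<And>n. \<Phi> n \<in> Dx"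
  shows "(\<lambda>f. \<Sum>n<N. a n * \<Phi> n f) \<in> Dx"
proof (induction N)
  case 0
  show ?case unfolding conj_dual_def by simp
next
  case (Suc N)
  have c1: "continuous_map tD euclidean (\<lambda>f. \<Sum>n<N. a n * \<Phi> n f)" using Suc cd_cont by blast
  have c2: "continuous_map tD euclidean (\<lambda>f. a N * \<Phi> N f)"
    using cd_cont[OF assms[of N]] by (simp add: continuous_map_atin tendsto_mult_left)
  have "continuous_map tD euclidean (\<lambda>f. (\<Sum>n<N. a n * \<Phi> n f) + a N * \<Phi> N f)"
    by (rule continuous_map_add[OF c1 c2])
  then have c: "continuous_map tD euclidean (\<lambda>f. \<Sum>n<Suc N. a n * \<Phi> n f)" by simp
  show ?case unfolding conj_dual_def
  proof (intro CollectI conjI ballI allI impI c)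
    fix x y assume "x \<in> D" "y \<in> D"
    then show "(\<Sum>n<Suc N. a n * \<Phi> n (x + y)) = (\<Sum>n<Suc N. a n * \<Phi> n x) + (\<Sum>n<Suc N. a n * \<Phi> n y)"
      using assms by (simp add: cd_add distrib_left sum.distrib)
  next
    fix c x assume "x \<in> D"
    then show "(\<Sum>n<Suc N. a n * \<Phi> n (sc c x)) = cnj c * (\<Sum>n<Suc N. a n * \<Phi> n x)"
      using assms by (simp add: cd_sc sum_distrib_left mult.left_commute distrib_left)
  next
    fix x assume "x \<notin> D"
    then have "\<And>n. \<Phi> n x = 0" using assms cd_out by blast
    then show "(\<Sum>n<Suc N. a n * \<Phi> n x) = 0" by simp
  qed
qed

end

context bctx
begin

lemma iii_to_ii:
  assumes reflexive: "sn_reflexive sc D P"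
    and L: "in_L_DDx sc D P S" and pos: "\<forall>f\<in>D. Im (S f f) = 0 \<and> Re (S f f) \<ge> 0"
    and bi: "\<forall>n k. S (\<xi> n) (\<xi> k) = (if n = k then 1 else 0)"
  shows "(\<forall>n. S (\<xi> n) \<in> Dx) \<and> (\<forall>n k. S (\<xi> n) (\<xi> k) = (if n = k then 1 else 0))
         \<and> (\<forall>f\<in>D. summable (\<lambda>n. (cmod (S (\<xi> n) f))\<^sup>2))
         \<and> continuous_map tD euclidean (\<lambda>f. sqrt (\<Sum>n. (cmod (S (\<xi> n) f))\<^sup>2))"
proof -
  have SD: "\<And>x. x \<in> D \<Longrightarrow> S x \<in> Dx" using L unfolding in_L_DDx_def by blast
  have Sadd: "\<And>x y. x \<in> D \<Longrightarrow> y \<in> D \<Longrightarrow> S (x + y) = S x + S y" using L unfolding in_L_DDx_def by blast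
  have Ssc: "\<And>c x. x \<in> D \<Longrightarrow> S (sc c x) = fsc c (S x)" using L unfolding in_L_DDx_def by blast
  have Sc: "continuous_map tD (sn_topology Dx Qs) S" using L unfolding in_L_DDx_def by blast
  have S0: "S 0 = 0" using Sadd[of 0 0] by simp
  have Sadd': "S (x + y) g = S x g + S y g" if "x \<in> D" "y \<in> D" for x y g using Sadd[OF that] by simp
  have Ssc': "S (sc c x) g = c * S x g" if "x \<in> D" for c x g using Ssc[OF that] unfolding fsc_def by simp
  have Sminus': "S (x - y) g = S x g - S y g" if "x \<in> D" "y \<in> D" for x y g
    using Sadd'[of x "sc (-1) y" g] Ssc'[of y "-1" g] that Dminus by (simp add: sc_minus_one)
  have Ssum: "S (\<Sum>i\<in>A. sc (c i) (x i)) g = (\<Sum>i\<in>A. c i * S (x i) g)" if "\<And>i. i \<in> A \<Longrightarrow> x i \<in> D" for A c x g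
    using that
  proof (induction A rule: infinite_finite_induct)
    case (infinite A) then show ?case using S0 by simp
  next
    case empty then show ?case using S0 by simp
  next
    case (insert a A)
    have "S (\<Sum>i\<in>insert a A. sc (c i) (x i)) g = S (sc (c a) (x a) + (\<Sum>i\<in>A. sc (c i) (x i))) g"
      using insert.hyps by simp
    also have "\<dots> = c a * S (x a) g + S (\<Sum>i\<in>A. sc (c i) (x i)) g"
      using insert.prems by (simp add: Sadd' Dsc Dsum Ssc')
    finally show ?case using insert by simp
  qed
  have herm: "S g f = cnj (S f g)" if f: "f \<in> D" and g: "g \<in> D" for f g
  proof -
    have r1: "Im (S (f + g) (f + g)) = 0" using pos Dadd[OF f g] by blast
    have r2: "Im (S (f + sc \<i> g) (f + sc \<i> g)) = 0" using pos Dadd[OF f Dsc[OF g]] by blast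
    have e1: "S (f + g) (f + g) = S f f + S f g + S g f + S g g"
      using f g SD by (simp add: Sadd' cd_add)
    have e2: "S (f + sc \<i> g) (f + sc \<i> g) = S f f - \<i> * S f g + \<i> * S g f + S g g"
      using f g SD Dsc by (simp add: Sadd' Ssc' cd_add cd_sc)
    have "Im (S f f) = 0" "Im (S g g) = 0" using pos f g by auto
    then have "Im (S f g + S g f) = 0" "Re (S g f - S f g) = 0" using r1 r2 e1 e2 by simp_all
    then show ?thesis by (simp add: complex_eq_iff)
  qed
  define \<zeta> where "\<zeta> n = S (\<xi> n)" for n
  have bessel: "(\<Sum>n<N. (cmod (\<zeta> n f))\<^sup>2) \<le> Re (S f f)" if f: "f \<in> D" for f N
  proof -
    define a where "a n = S f (\<xi> n)" for n
    define w where "w = (\<Sum>n<N. sc (a n) (\<xi> n))"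
    have wD: "w \<in> D" unfolding w_def by (intro Dsum Dsc xiD)
    have sA: "(\<Sum>n<N. cnj (a n) * a n) = complex_of_real (\<Sum>n<N. (cmod (a n))\<^sup>2)"
      unfolding of_real_sum by (intro sum.cong refl) (rule cnj_mult_self)
    have fw: "S f w = (\<Sum>n<N. cnj (a n) * a n)"
      unfolding w_def using cd_sum[OF SD[OF f], where A="{..<N}" and x=\<xi> and c=a] xiD by (simp add: a_def)
    have wf: "S w f = (\<Sum>n<N. cnj (a n) * a n)"
    proof -
      have "S w f = (\<Sum>n<N. a n * S (\<xi> n) f)" unfolding w_def by (rule Ssum) (simp add: xiD)
      also have "\<dots> = (\<Sum>n<N. a n * cnj (a n))" using herm[OF f xiD] by (simp add: a_def)
      finally show ?thesis by (simp add: mult.commute)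
    qed
    have ww: "S w w = (\<Sum>n<N. cnj (a n) * a n)"
    proof -
      have "S w w = (\<Sum>n<N. a n * S (\<xi> n) w)" unfolding w_def by (rule Ssum) (simp add: xiD)
      also have "\<dots> = (\<Sum>n<N. a n * cnj (a n))"
      proof (intro sum.cong refl)
        fix n assume n: "n \<in> {..<N}"
        have "S (\<xi> n) w = (\<Sum>m<N. cnj (a m) * S (\<xi> n) (\<xi> m))"
          unfolding w_def using cd_sum[OF SD[OF xiD], where A="{..<N}" and x=\<xi> and c=a] xiD by simp
        also have "\<dots> = (\<Sum>m<N. if m = n then cnj (a n) else 0)" using bi by (intro sum.cong) auto
        also have "\<dots> = cnj (a n)" using n by (simp add: sum.delta')
        finally show "a n * S (\<xi> n) w = a n * cnj (a n)" by simp
      qed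
      finally show ?thesis by (simp add: mult.commute)
    qed
    have "S (f - w) (f - w) = S f f - S f w - S w f + S w w"
      using f wD SD by (simp add: Sminus' cd_diff Ddiff)
    also have "\<dots> = S f f - complex_of_real (\<Sum>n<N. (cmod (a n))\<^sup>2)" using fw wf ww sA by simp
    finally have "Re (S (f - w) (f - w)) = Re (S f f) - (\<Sum>n<N. (cmod (a n))\<^sup>2)" by simp
    moreover have "Re (S (f - w) (f - w)) \<ge> 0" using pos Ddiff[OF f wD] by blast
    moreover have "cmod (\<zeta> n f) = cmod (a n)" for n
      using herm[OF xiD f] unfolding \<zeta>_def a_def by simp
    ultimately show ?thesis by simp
  qed
  have summ: "summable (\<lambda>n. (cmod (\<zeta> n f))\<^sup>2)" if "f \<in> D" for f
    by (rule summableI_nonneg_bounded[OF _ bessel[OF that]]) simp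
  have zDx: "\<And>n. \<zeta> n \<in> Dx" unfolding \<zeta>_def using SD xiD by blast
  define pz where "pz f = sqrt (\<Sum>n. (cmod (\<zeta> n f))\<^sup>2)" for f
  have pzle: "(\<Sum>n. (cmod (\<zeta> n f))\<^sup>2) \<le> Re (S f f)" if "f \<in> D" for f
    by (rule suminf_le_const[OF summ[OF that] bessel[OF that]])
  have Sbdd: "\<exists>K. \<forall>v\<in>B. \<forall>w\<in>B. cmod (S v w) \<le> K" if B: "B \<subseteq> D" "sn_bounded P B" for B
  proof (cases "B = {}")
    case True then show ?thesis by simp
  next
    case Bne: False
    define qB where "qB = (\<lambda>\<Phi>::'a \<Rightarrow> complex. Sup ((\<lambda>v. cmod (\<Phi> v)) ` B))"
    have qB: "qB \<in> Qs" unfolding qB_def strong_seminorms_def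
      by (rule CollectI, rule exI[of _ B]) (use B Bne in simp)
    have "openin (sn_topology Dx Qs) (sball Dx {qB} (S 0) 1)"
      by (rule sball_open) (use qB SD in auto)
    then have "openin tD {x \<in> topspace tD. S x \<in> sball Dx {qB} (S 0) 1}"
      using Sc unfolding continuous_map_def by blast
    then have o: "openin tD {x \<in> D. S x \<in> sball Dx {qB} (S 0) 1}" by simp
    have "0 \<in> {x \<in> D. S x \<in> sball Dx {qB} (S 0) 1}"
      using SD[OF D0] Bne unfolding sball_def qB_def by (simp add: S0)
    then obtain F e where F: "finite F" "F \<subseteq> P" "e > 0" "sball D F 0 e \<subseteq> {x \<in> D. S x \<in> sball Dx {qB} (S 0) 1}"
      using sn_openD[OF okD o] by meson
    have "\<forall>w\<in>B. \<forall>v\<in>D. cmod (S v w) \<le> (2 / e) * (\<Sum>p\<in>F. p v)"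
    proof (intro ballI)
      fix w v assume w: "w \<in> B" and v: "v \<in> D"
      show "cmod (S v w) \<le> (2 / e) * (\<Sum>p\<in>F. p v)"
      proof (rule dominate[OF _ _ F(1,2,3) _ v])
        fix y assume y: "y \<in> sball D F 0 e"
        then have yD: "y \<in> D" and "S y \<in> sball Dx {qB} (S 0) 1" using F(4) by auto
        then have "qB (S y) < 1" unfolding sball_def by (simp add: S0)
        moreover have "cmod (S y w) \<le> qB (S y)"
        proof -
          obtain K where "\<forall>u\<in>B. cmod (S y u) \<le> K" using cd_bdd[OF SD[OF yD] B] by blast
          then have "bdd_above ((\<lambda>u. cmod (S y u)) ` B)" by (auto intro: bdd_aboveI2)
          then show ?thesis unfolding qB_def using w by (intro cSUP_upper)
        qed
        ultimately show "cmod (S y w) \<le> 1" by simp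
      qed (auto simp: Ssc' norm_mult)
    qed
    moreover obtain K where "\<forall>v\<in>B. (2 / e) * (\<Sum>p\<in>F. p v) \<le> K"
      using bounded_dom[OF B F(1,2), of "2/e" "\<lambda>v. (2 / e) * (\<Sum>p\<in>F. p v)"] F(3) by auto
    ultimately show ?thesis using B(1) by (meson in_mono order_trans)
  qed
  define A where "A = {(\<lambda>f. \<Sum>n<N. a n * \<zeta> n f) | a N. (\<Sum>n<N. (cmod (a n))\<^sup>2) \<le> 1}"
  have AI: "(\<lambda>f. \<Sum>n<N. a n * \<zeta> n f) \<in> A" if "(\<Sum>n<N. (cmod (a n))\<^sup>2) \<le> 1" for a N
    unfolding A_def by (rule CollectI, rule exI[of _ a], rule exI[of _ N]) (simp add: that)
  have AD: "A \<subseteq> Dx"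
  proof
    fix \<Phi> assume "\<Phi> \<in> A"
    then obtain a N where "\<Phi> = (\<lambda>f. \<Sum>n<N. a n * \<zeta> n f)" unfolding A_def by blast
    then show "\<Phi> \<in> Dx" using Dx_lincomb[where \<Phi>=\<zeta>, OF zDx] by simp
  qed
  have Ane: "A \<noteq> {}"
  proof -
    have "(\<lambda>f. \<Sum>n<0. (0::complex) * \<zeta> n f) \<in> A" by (rule AI) simp
    then show ?thesis by blast
  qed
  have Aval: "cmod (\<Phi> v) \<le> sqrt (Re (S v v))" if \<Phi>A: "\<Phi> \<in> A" and vD: "v \<in> D" for \<Phi> v
  proof -
    obtain a N where \<Phi>: "\<Phi> = (\<lambda>f. \<Sum>n<N. a n * \<zeta> n f)" "(\<Sum>n<N. (cmod (a n))\<^sup>2) \<le> 1"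
      using \<Phi>A unfolding A_def by blast
    have "cmod (\<Phi> v) \<le> (\<Sum>n<N. cmod (a n) * cmod (\<zeta> n v))"
      unfolding \<Phi>(1) by (rule order_trans[OF norm_sum]) (simp add: norm_mult)
    also have "\<dots> = (\<Sum>n<N. \<bar>cmod (a n)\<bar> * \<bar>cmod (\<zeta> n v)\<bar>)" by simp
    also have "\<dots> \<le> L2_set (\<lambda>n. cmod (a n)) {..<N} * L2_set (\<lambda>n. cmod (\<zeta> n v)) {..<N}"
      by (rule L2_set_mult_ineq)
    also have "\<dots> \<le> 1 * sqrt (Re (S v v))"
    proof (rule mult_mono)
      show "L2_set (\<lambda>n. cmod (a n)) {..<N} \<le> 1" unfolding L2_set_def using \<Phi>(2) by simp
      show "L2_set (\<lambda>n. cmod (\<zeta> n v)) {..<N} \<le> sqrt (Re (S v v))"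
        unfolding L2_set_def using bessel[OF vD] by (rule real_sqrt_le_mono)
    qed auto
    finally show ?thesis by simp
  qed
  have Abdd: "sn_bounded Qs A"
    unfolding sn_bounded_def
  proof
    fix q assume "q \<in> Qs"
    then obtain B where B: "q = (\<lambda>\<Phi>. Sup ((\<lambda>v. cmod (\<Phi> v)) ` B))" "B \<noteq> {}" "B \<subseteq> D" "sn_bounded P B"
      unfolding strong_seminorms_def by blast
    obtain K where K: "\<forall>v\<in>B. \<forall>w\<in>B. cmod (S v w) \<le> K" using Sbdd[OF B(3,4)] by blast
    have "\<forall>\<Phi>\<in>A. q \<Phi> \<le> sqrt K"
    proof
      fix \<Phi> assume \<Phi>: "\<Phi> \<in> A"
      have "Sup ((\<lambda>v. cmod (\<Phi> v)) ` B) \<le> sqrt K"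
      proof (rule cSUP_least[OF B(2)])
        fix v assume v: "v \<in> B"
        have "cmod (\<Phi> v) \<le> sqrt (Re (S v v))" using Aval[OF \<Phi>] v B(3) by blast
        also have "Re (S v v) \<le> K" using K v complex_Re_le_cmod by (meson order_trans)
        then have "sqrt (Re (S v v)) \<le> sqrt K" by simp
        finally show "cmod (\<Phi> v) \<le> sqrt K" .
      qed
      then show "q \<Phi> \<le> sqrt K" using B(1) by simp
    qed
    then show "bdd_above (q ` A)" by (auto intro: bdd_aboveI2)
  qed
  define Vxx where "Vxx = lin_dual fsc Dx Qs"
  define R where "R = strong_seminorms Dx Qs"
  define J where "J = (\<lambda>f (\<Phi>::'a \<Rightarrow> complex). if \<Phi> \<in> Dx then \<Phi> f else 0)"
  have reflJ: "bij_betw J D Vxx \<and> homeomorphic_map tD (sn_topology Vxx R) J"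
    using reflexive unfolding sn_reflexive_def Let_def Vxx_def R_def J_def by simp
  have Jc: "continuous_map tD (sn_topology Vxx R) J"
    using reflJ homeomorphic_imp_continuous_map by blast
  have J0V: "J 0 \<in> Vxx" using reflJ unfolding bij_betw_def by auto
  have J0: "J 0 = (\<lambda>\<Phi>. 0)"
  proof
    fix \<Phi> :: "'a \<Rightarrow> complex"
    show "J 0 \<Phi> = 0" unfolding J_def using cd_zero[of \<Phi>] by simp
  qed
  define rA where "rA = (\<lambda>y::('a \<Rightarrow> complex) \<Rightarrow> complex. Sup ((\<lambda>\<Phi>. cmod (y \<Phi>)) ` A))"
  have rA: "rA \<in> R" unfolding rA_def R_def strong_seminorms_def[of Dx Qs]
    by (rule CollectI, rule exI[of _ A]) (use Ane AD Abdd in simp)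
  have "openin (sn_topology Vxx R) (sball Vxx {rA} (J 0) 1)"
    by (rule sball_open) (use rA J0V in auto)
  then have "openin tD {x \<in> topspace tD. J x \<in> sball Vxx {rA} (J 0) 1}"
    using Jc unfolding continuous_map_def by blast
  then have o: "openin tD {x \<in> D. J x \<in> sball Vxx {rA} (J 0) 1}" by simp
  have "0 \<in> {x \<in> D. J x \<in> sball Vxx {rA} (J 0) 1}"
    using J0V Ane unfolding sball_def rA_def by (simp add: J0)
  then obtain F e where F: "finite F" "F \<subseteq> P" "e > 0" "sball D F 0 e \<subseteq> {x \<in> D. J x \<in> sball Vxx {rA} (J 0) 1}"
    using sn_openD[OF okD o] by meson
  have pz1: "pz y \<le> 1" if y: "y \<in> sball D F 0 e" for y
  proof -
    have yD: "y \<in> D" and "J y \<in> sball Vxx {rA} (J 0) 1" using F(4) y by auto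
    then have r: "rA (J y) < 1" unfolding sball_def by (simp add: J0 fun_diff_def)
    have bdd: "bdd_above ((\<lambda>\<Phi>. cmod (J y \<Phi>)) ` A)"
    proof -
      define qy where "qy = (\<lambda>\<Phi>::'a \<Rightarrow> complex. Sup ((\<lambda>v. cmod (\<Phi> v)) ` {y}))"
      have "qy \<in> Qs" unfolding qy_def strong_seminorms_def sn_bounded_def
        by (rule CollectI, rule exI[of _ "{y}"]) (use yD in simp)
      moreover have Ab: "\<forall>p\<in>Qs. bdd_above (p ` A)" using Abdd unfolding sn_bounded_def .
      ultimately have "bdd_above (qy ` A)" by (rule bspec[rotated])
      moreover have "qy \<Phi> = cmod (J y \<Phi>)" if "\<Phi> \<in> A" for \<Phi> using that AD unfolding qy_def J_def by auto
      ultimately show ?thesis by (metis (no_types, lifting) image_cong)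
    qed
    have part: "(\<Sum>n<N. (cmod (\<zeta> n y))\<^sup>2) \<le> 1" for N
    proof -
      define s where "s = sqrt (\<Sum>n<N. (cmod (\<zeta> n y))\<^sup>2)"
      have s0: "s \<ge> 0" unfolding s_def by (simp add: sum_nonneg)
      have ssq: "s\<^sup>2 = (\<Sum>n<N. (cmod (\<zeta> n y))\<^sup>2)" unfolding s_def by (simp add: sum_nonneg)
      show ?thesis
      proof (cases "s = 0")
        case True then show ?thesis using ssq by simp
      next
        case False
        then have spos: "s > 0" using s0 by simp
        define a where "a n = cnj (\<zeta> n y) / complex_of_real s" for n
        have asum: "(\<Sum>n<N. (cmod (a n))\<^sup>2) = 1"
        proof -
          have "(\<Sum>n<N. (cmod (a n))\<^sup>2) = (\<Sum>n<N. (cmod (\<zeta> n y))\<^sup>2) / s\<^sup>2"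
            unfolding a_def using spos by (simp add: norm_divide power_divide sum_divide_distrib)
          moreover have "(\<Sum>n<N. (cmod (\<zeta> n y))\<^sup>2) \<noteq> 0"
            using ssq spos by (metis power_not_zero less_irrefl)
          ultimately show ?thesis using ssq by simp
        qed
        define \<Phi> where "\<Phi> = (\<lambda>f. \<Sum>n<N. a n * \<zeta> n f)"
        have \<Phi>A: "\<Phi> \<in> A" unfolding \<Phi>_def using asum by (intro AI) simp
        have "\<Phi> y = (\<Sum>n<N. cnj (\<zeta> n y) * \<zeta> n y) / complex_of_real s"
          unfolding \<Phi>_def a_def by (simp add: sum_divide_distrib)
        also have "(\<Sum>n<N. cnj (\<zeta> n y) * \<zeta> n y) = complex_of_real (s\<^sup>2)"
          unfolding ssq of_real_sum by (rule sum.cong[OF refl], rule cnj_mult_self)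
        finally have "\<Phi> y = complex_of_real s" using spos by (simp add: power2_eq_square)
        then have "s = cmod (J y \<Phi>)" using \<Phi>A AD s0 unfolding J_def by auto
        also have "\<dots> \<le> rA (J y)" unfolding rA_def using bdd \<Phi>A by (intro cSUP_upper)
        finally have "s < 1" using r by simp
        then have "s\<^sup>2 \<le> 1" using s0 by (simp add: power_le_one)
        then show ?thesis using ssq by simp
      qed
    qed
    have "(\<Sum>n. (cmod (\<zeta> n y))\<^sup>2) \<le> 1" by (rule suminf_le_const[OF summ[OF yD] part])
    then show ?thesis unfolding pz_def by (simp add: suminf_nonneg summ[OF yD])
  qed
  have pz0: "pz y \<ge> 0" if "y \<in> D" for y unfolding pz_def using summ[OF that] by (simp add: suminf_nonneg)
  have pzh: "pz (sc c y) = cmod c * pz y" if y: "y \<in> D" for c y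
  proof -
    have "(\<lambda>n. (cmod (\<zeta> n (sc c y)))\<^sup>2) = (\<lambda>n. (cmod c)\<^sup>2 * (cmod (\<zeta> n y))\<^sup>2)"
      using y zDx by (simp add: cd_sc norm_mult power_mult_distrib)
    then have "(\<Sum>n. (cmod (\<zeta> n (sc c y)))\<^sup>2) = (cmod c)\<^sup>2 * (\<Sum>n. (cmod (\<zeta> n y))\<^sup>2)"
      using suminf_mult[OF summ[OF y]] by simp
    then show ?thesis unfolding pz_def by (simp add: real_sqrt_mult)
  qed
  have pztri: "\<bar>pz x - pz y\<bar> \<le> pz (x - y)" if x: "x \<in> D" and y: "y \<in> D" for x y
  proof -
    have a: "pz x \<le> pz y + pz (x - y)"
    proof -
      have "\<zeta> n x = \<zeta> n y + \<zeta> n (x - y)" for n using zDx x y Ddiff by (simp add: cd_diff)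
      then have "pz x = sqrt (\<Sum>n. (cmod (\<zeta> n y + \<zeta> n (x - y)))\<^sup>2)" unfolding pz_def by simp
      also have "\<dots> \<le> pz y + pz (x - y)"
        unfolding pz_def by (rule l2_minkowski(2)) (use summ x y Ddiff in auto)
      finally show ?thesis .
    qed
    have b: "pz y \<le> pz x + pz (y - x)"
    proof -
      have "\<zeta> n y = \<zeta> n x + \<zeta> n (y - x)" for n using zDx x y Ddiff by (simp add: cd_diff)
      then have "pz y = sqrt (\<Sum>n. (cmod (\<zeta> n x + \<zeta> n (y - x)))\<^sup>2)" unfolding pz_def by simp
      also have "\<dots> \<le> pz x + pz (y - x)"
        unfolding pz_def by (rule l2_minkowski(2)) (use summ x y Ddiff in auto)
      finally show ?thesis .
    qed
    have "pz (y - x) = pz (x - y)"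
      using pzh[of "x - y" "-1"] Ddiff[OF x y] by (simp add: sc_minus_one)
    then show ?thesis using a b by simp
  qed
  have dom: "pz v \<le> (2 / e) * (\<Sum>p\<in>F. p v)" if "v \<in> D" for v
    by (rule dominate[OF pz0 pzh F(1,2,3) pz1 that])
  have cont: "continuous_map tD euclidean pz"
  proof (rule dom_cont[OF pztri F(1,2) _ dom])
    show "0 \<le> 2 / e" using F(3) by simp
  qed
  show ?thesis using zDx bi summ cont unfolding \<zeta>_def pz_def by blast
qed

end

theorem theorem3p3:
  fixes sc :: "complex \<Rightarrow> 'h::ab_group_add \<Rightarrow> 'h"
    and ip :: "'h \<Rightarrow> 'h \<Rightarrow> complex"
    and D :: "'h set" and P :: "('h \<Rightarrow> real) set"
    and \<xi> :: "nat \<Rightarrow> 'h"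
  assumes rhs: "rigged_hilbert sc ip D P"
    and complete: "sn_complete_set P D"
    and reflexive: "sn_reflexive sc D P"
    and qcomplete: "sn_quasi_complete (conj_dual sc D P) (strong_seminorms D P)"
    and basis: "topological_basis_sn sc D P \<xi>"
  shows "(riesz_like_basis sc ip D P \<xi>
            \<longleftrightarrow> (\<exists>!\<zeta>. (\<forall>n. \<zeta> n \<in> conj_dual sc D P)
                   \<and> (\<forall>n k. \<zeta> n (\<xi> k) = (if n = k then 1 else 0))
                   \<and> (\<forall>f\<in>D. summable (\<lambda>n. (cmod (\<zeta> n f))\<^sup>2))
                   \<and> continuous_map (sn_topology D P) euclidean
                       (\<lambda>f. sqrt (\<Sum>n. (cmod (\<zeta> n f))\<^sup>2))))
       \<and> (riesz_like_basis sc ip D P \<xi>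
            \<longleftrightarrow> (\<exists>S. in_L_DDx sc D P S
                   \<and> (\<forall>f\<in>D. Im (S f f) = 0 \<and> Re (S f f) \<ge> 0)
                   \<and> (\<forall>n k. S (\<xi> n) (\<xi> k) = (if n = k then 1 else 0))))"
proof -
  have H: "complex_hilbert sc ip" using rhs unfolding rigged_hilbert_def by (elim conjE)
  interpret B: bctx sc ip D P \<xi>
    by (intro bctx.intro rctx.intro hil.intro rctx_axioms.intro bctx_axioms.intro H rhs basis)
  have ii: "riesz_like_basis sc ip D P \<xi>
            \<longleftrightarrow> (\<exists>!\<zeta>. (\<forall>n. \<zeta> n \<in> conj_dual sc D P)
                   \<and> (\<forall>n k. \<zeta> n (\<xi> k) = (if n = k then 1 else 0))
                   \<and> (\<forall>f\<in>D. summable (\<lambda>n. (cmod (\<zeta> n f))\<^sup>2))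
                   \<and> continuous_map (sn_topology D P) euclidean
                       (\<lambda>f. sqrt (\<Sum>n. (cmod (\<zeta> n f))\<^sup>2)))"
  proof
    assume "riesz_like_basis sc ip D P \<xi>"
    then obtain T where T: "in_C_DH sc ip D P T" "orthonormal_basis sc ip (\<lambda>n. T (\<xi> n))"
      unfolding riesz_like_basis_def by blast
    note Z = B.i_to_ii[OF T]
    show "\<exists>!\<zeta>. (\<forall>n. \<zeta> n \<in> conj_dual sc D P)
                   \<and> (\<forall>n k. \<zeta> n (\<xi> k) = (if n = k then 1 else 0))
                   \<and> (\<forall>f\<in>D. summable (\<lambda>n. (cmod (\<zeta> n f))\<^sup>2))
                   \<and> continuous_map (sn_topology D P) euclidean
                       (\<lambda>f. sqrt (\<Sum>n. (cmod (\<zeta> n f))\<^sup>2))"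
    proof (rule ex1I[where a="\<lambda>n f. if f \<in> D then ip (T (\<xi> n)) (T f) else 0"])
      fix \<zeta> assume h: "(\<forall>n. \<zeta> n \<in> conj_dual sc D P)
                   \<and> (\<forall>n k. \<zeta> n (\<xi> k) = (if n = k then 1 else 0))
                   \<and> (\<forall>f\<in>D. summable (\<lambda>n. (cmod (\<zeta> n f))\<^sup>2))
                   \<and> continuous_map (sn_topology D P) euclidean
                       (\<lambda>f. sqrt (\<Sum>n. (cmod (\<zeta> n f))\<^sup>2))"
      show "\<zeta> = (\<lambda>n f. if f \<in> D then ip (T (\<xi> n)) (T f) else 0)"
        by (rule B.zeta_unique[OF conjunct1[OF h] conjunct1[OF conjunct2[OF h]]
                                  conjunct1[OF Z] conjunct1[OF conjunct2[OF Z]]])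
    qed (rule Z)
  next
    assume "\<exists>!\<zeta>. (\<forall>n. \<zeta> n \<in> conj_dual sc D P)
                   \<and> (\<forall>n k. \<zeta> n (\<xi> k) = (if n = k then 1 else 0))
                   \<and> (\<forall>f\<in>D. summable (\<lambda>n. (cmod (\<zeta> n f))\<^sup>2))
                   \<and> continuous_map (sn_topology D P) euclidean
                       (\<lambda>f. sqrt (\<Sum>n. (cmod (\<zeta> n f))\<^sup>2))"
    then obtain \<zeta> where "(\<forall>n. \<zeta> n \<in> conj_dual sc D P)
                   \<and> (\<forall>n k. \<zeta> n (\<xi> k) = (if n = k then 1 else 0))
                   \<and> (\<forall>f\<in>D. summable (\<lambda>n. (cmod (\<zeta> n f))\<^sup>2))
                   \<and> continuous_map (sn_topology D P) euclidean
                       (\<lambda>f. sqrt (\<Sum>n. (cmod (\<zeta> n f))\<^sup>2))" by blast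
    then show "riesz_like_basis sc ip D P \<xi>" using B.ii_to_i by blast
  qed
  have iii: "riesz_like_basis sc ip D P \<xi>
            \<longleftrightarrow> (\<exists>S. in_L_DDx sc D P S
                   \<and> (\<forall>f\<in>D. Im (S f f) = 0 \<and> Re (S f f) \<ge> 0)
                   \<and> (\<forall>n k. S (\<xi> n) (\<xi> k) = (if n = k then 1 else 0)))"
  proof
    assume "riesz_like_basis sc ip D P \<xi>"
    then obtain T where T: "in_C_DH sc ip D P T" "orthonormal_basis sc ip (\<lambda>n. T (\<xi> n))"
      unfolding riesz_like_basis_def by blast
    show "\<exists>S. in_L_DDx sc D P S
                   \<and> (\<forall>f\<in>D. Im (S f f) = 0 \<and> Re (S f f) \<ge> 0)
                   \<and> (\<forall>n k. S (\<xi> n) (\<xi> k) = (if n = k then 1 else 0))"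
      using B.i_to_iii[OF T] by blast
  next
    assume "\<exists>S. in_L_DDx sc D P S
                   \<and> (\<forall>f\<in>D. Im (S f f) = 0 \<and> Re (S f f) \<ge> 0)
                   \<and> (\<forall>n k. S (\<xi> n) (\<xi> k) = (if n = k then 1 else 0))"
    then obtain S where S: "in_L_DDx sc D P S" "\<forall>f\<in>D. Im (S f f) = 0 \<and> Re (S f f) \<ge> 0"
      "\<forall>n k. S (\<xi> n) (\<xi> k) = (if n = k then 1 else 0)" by blast
    have Z: "(\<forall>n. S (\<xi> n) \<in> conj_dual sc D P) \<and> (\<forall>n k. S (\<xi> n) (\<xi> k) = (if n = k then 1 else 0))
         \<and> (\<forall>f\<in>D. summable (\<lambda>n. (cmod (S (\<xi> n) f))\<^sup>2))
         \<and> continuous_map (sn_topology D P) euclidean (\<lambda>f. sqrt (\<Sum>n. (cmod (S (\<xi> n) f))\<^sup>2))"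
      by (rule B.iii_to_ii[OF reflexive S])
    show "riesz_like_basis sc ip D P \<xi>"
      by (rule B.ii_to_i[where \<zeta>="\<lambda>n. S (\<xi> n)"]) (use Z in auto)
  qed
  show ?thesis using ii iii by blast
qed

end
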